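(* For any quantum channel $\mathcal{N}$, any integer $d\ge1$ with $I_d$ the noiseless qudit channel (identity channel on a $d$-dimensional system), and any $k>0$, $$F^{PPTp}(\mathcal{N}\otimes I_d,kd)=F^{PPTp}(\mathcal{N},k).$$ Consequently $\kappa^{PPTp}(\mathcal{N}\otimes I_d)=d\,\kappa^{PPTp}(\mathcal{N})$.
   Context: For a quantum channel $\mathcal{N}:\mathcal{L}(A')\to\mathcal{L}(B)$ with $A\cong A'$ and Choi matrix $J_{AB}=\sum_{i,j}|i\rangle\langle j|_A\otimes\mathcal{N}(|i\rangle\langle j|_{A'})$, and $k>0$, $F^{PPTp}(\mathcal{N},k)$ is the optimal value of: maximize $\operatorname{tr}(J_{AB}W_{AB})$ subject to $0\le W_{AB}\le\rho_A\otimes\mathbb{1}_B$, $\operatorname{tr}\rho_A=1$, $-\frac1k\rho_A\otimes\mathbb{1}_B\le W_{AB}^{T_B}\le\frac1k\rho_A\otimes\mathbb{1}_B$, where $T_B$ is partial transpose on $B$. (For a product channel the input system is $AA_2$ and output $BB_2$, with the partial transpose taken on the whole output.) $\kappa^{PPTp}(\mathcal{N})=\max\{k\ge0:F^{PPTp}(\mathcal{N},k)=1\}$. *)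

theory Defs
  imports "HOL-Analysis.Analysis"
begin

text \<open>Square complex matrices of dimension n are represented as functions
  nat => nat => complex; only the entries with indices below n are meaningful.
  Composite systems A (dim a) and B (dim b) use the index encoding
  (i, x) <-> i * b + x with i < a, x < b (first factor is the more significant one).\<close>

type_synonym cmat = "nat \<Rightarrow> nat \<Rightarrow> complex"

definition trace :: "nat \<Rightarrow> cmat \<Rightarrow> complex" where
  "trace n M = (\<Sum>i<n. M i i)"

definition mmult :: "nat \<Rightarrow> cmat \<Rightarrow> cmat \<Rightarrow> cmat" where
  "mmult n A B = (\<lambda>i j. \<Sum>l<n. A i l * B l j)"

definition idm :: "nat \<Rightarrow> cmat" where
  "idm n = (\<lambda>i j. if i = j then 1 else 0)"

text \<open>Positive semidefinite: the quadratic form is real and nonnegative (this also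
  forces hermiticity over the complex numbers).\<close>
definition psd :: "nat \<Rightarrow> cmat \<Rightarrow> bool" where
  "psd n M \<longleftrightarrow> (\<forall>v :: nat \<Rightarrow> complex.
      let q = (\<Sum>i<n. \<Sum>j<n. cnj (v i) * M i j * v j) in Im q = 0 \<and> Re q \<ge> 0)"

definition loewner_le :: "nat \<Rightarrow> cmat \<Rightarrow> cmat \<Rightarrow> bool" where
  "loewner_le n A B \<longleftrightarrow> psd n (\<lambda>i j. B i j - A i j)"

definition msmult :: "complex \<Rightarrow> cmat \<Rightarrow> cmat" where
  "msmult c A = (\<lambda>i j. c * A i j)"

definition kron :: "nat \<Rightarrow> cmat \<Rightarrow> cmat \<Rightarrow> cmat" where
  "kron m A B = (\<lambda>p q. A (p div m) (q div m) * B (p mod m) (q mod m))"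

definition ptrans :: "nat \<Rightarrow> cmat \<Rightarrow> cmat" where
  "ptrans b W = (\<lambda>p q. W ((p div b) * b + q mod b) ((q div b) * b + p mod b))"

text \<open>A linear map from a x a matrices to b x b matrices is given by the images
  U i j = N(|i><j|) of the matrix units (i, j < a); it acts by linear extension.\<close>
definition lmap_apply :: "nat \<Rightarrow> (nat \<Rightarrow> nat \<Rightarrow> cmat) \<Rightarrow> cmat \<Rightarrow> cmat" where
  "lmap_apply a U X = (\<lambda>x y. \<Sum>i<a. \<Sum>j<a. X i j * U i j x y)"

definition id_units :: "nat \<Rightarrow> nat \<Rightarrow> cmat" where
  "id_units i j = (\<lambda>x y. if x = i \<and> y = j then 1 else 0)"

definition tensor_map :: "nat \<Rightarrow> nat \<Rightarrow> (nat \<Rightarrow> nat \<Rightarrow> cmat) \<Rightarrow> (nat \<Rightarrow> nat \<Rightarrow> cmat)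
    \<Rightarrow> (nat \<Rightarrow> nat \<Rightarrow> cmat)" where
  "tensor_map c e U V = (\<lambda>p q. kron e (U (p div c) (q div c)) (V (p mod c) (q mod c)))"

definition positive_map :: "nat \<Rightarrow> nat \<Rightarrow> (nat \<Rightarrow> nat \<Rightarrow> cmat) \<Rightarrow> bool" where
  "positive_map a b U \<longleftrightarrow> (\<forall>X. psd a X \<longrightarrow> psd b (lmap_apply a U X))"

definition completely_positive :: "nat \<Rightarrow> nat \<Rightarrow> (nat \<Rightarrow> nat \<Rightarrow> cmat) \<Rightarrow> bool" where
  "completely_positive a b U \<longleftrightarrow>
     (\<forall>n. positive_map (n * a) (n * b) (tensor_map a b id_units U))"

definition trace_preserving :: "nat \<Rightarrow> nat \<Rightarrow> (nat \<Rightarrow> nat \<Rightarrow> cmat) \<Rightarrow> bool" where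
  "trace_preserving a b U \<longleftrightarrow> (\<forall>i<a. \<forall>j<a. trace b (U i j) = (if i = j then 1 else 0))"

definition quantum_channel :: "nat \<Rightarrow> nat \<Rightarrow> (nat \<Rightarrow> nat \<Rightarrow> cmat) \<Rightarrow> bool" where
  "quantum_channel a b U \<longleftrightarrow> 0 < a \<and> 0 < b \<and> completely_positive a b U \<and> trace_preserving a b U"

text \<open>Choi matrix J_AB = sum_{i,j} |i><j|_A \<otimes> N(|i><j|), dimension a * b.\<close>
definition choi :: "nat \<Rightarrow> (nat \<Rightarrow> nat \<Rightarrow> cmat) \<Rightarrow> cmat" where
  "choi b U = (\<lambda>p q. U (p div b) (q div b) (p mod b) (q mod b))"

definition pptp_feasible :: "nat \<Rightarrow> nat \<Rightarrow> real \<Rightarrow> cmat \<Rightarrow> cmat \<Rightarrow> bool" where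
  "pptp_feasible a b k \<rho> W \<longleftrightarrow>
     loewner_le (a * b) (\<lambda>_ _. 0) W \<and>
     loewner_le (a * b) W (kron b \<rho> (idm b)) \<and>
     trace a \<rho> = 1 \<and>
     loewner_le (a * b) (msmult (- complex_of_real (1 / k)) (kron b \<rho> (idm b))) (ptrans b W) \<and>
     loewner_le (a * b) (ptrans b W) (msmult (complex_of_real (1 / k)) (kron b \<rho> (idm b)))"

definition F_pptp :: "nat \<Rightarrow> nat \<Rightarrow> (nat \<Rightarrow> nat \<Rightarrow> cmat) \<Rightarrow> real \<Rightarrow> real" where
  "F_pptp a b U k = Sup {Re (trace (a * b) (mmult (a * b) (choi b U) W)) | \<rho> W. pptp_feasible a b k \<rho> W}"

text \<open>kappa^{PPTp}(N) = max {k >= 0 : F^{PPTp}(N, k) = 1}; at k = 0 the PPT constraint is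
  vacuous (1/k = infinity), so F^{PPTp}(N, 0) = 1 by convention.\<close>
definition kappa_pptp :: "nat \<Rightarrow> nat \<Rightarrow> (nat \<Rightarrow> nat \<Rightarrow> cmat) \<Rightarrow> real" where
  "kappa_pptp a b U = (GREATEST k. 0 \<le> k \<and> (k = 0 \<or> F_pptp a b U k = 1))"

end

theory Submission
  imports Defs
begin


definition bf :: "nat \<Rightarrow> cmat \<Rightarrow> (nat \<Rightarrow> complex) \<Rightarrow> (nat \<Rightarrow> complex) \<Rightarrow> complex" where
  "bf n M x y = (\<Sum>p<n. \<Sum>q<n. cnj (x p) * M p q * y q)"

definition nn :: "complex \<Rightarrow> bool" where
  "nn c \<longleftrightarrow> Im c = 0 \<and> 0 \<le> Re c"

lemma psd_bf: "psd n M \<longleftrightarrow> (\<forall>v. nn (bf n M v v))"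
  unfolding psd_def bf_def nn_def Let_def by simp

lemma bf_diff_mat: "bf n (\<lambda>i j. A i j - B i j) x y = bf n A x y - bf n B x y"
  unfolding bf_def by (simp add: algebra_simps sum_subtractf)

lemma bf_add_mat: "bf n (\<lambda>i j. A i j + B i j) x y = bf n A x y + bf n B x y"
  unfolding bf_def by (simp add: algebra_simps sum.distrib)

lemma bf_smult_mat: "bf n (\<lambda>i j. c * A i j) x y = c * bf n A x y"
  unfolding bf_def by (simp add: algebra_simps sum_distrib_left)

lemma bf_msmult: "bf n (msmult c A) x y = c * bf n A x y"
  unfolding msmult_def by (rule bf_smult_mat)

lemma loewner_bf: "loewner_le n A B \<longleftrightarrow> (\<forall>v. nn (bf n B v v - bf n A v v))"
  unfolding loewner_le_def psd_bf bf_diff_mat ..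

lemma bf_add_left: "bf n M (\<lambda>i. x i + y i) z = bf n M x z + bf n M y z"
  unfolding bf_def by (simp add: algebra_simps sum.distrib)
lemma bf_add_right: "bf n M z (\<lambda>i. x i + y i) = bf n M z x + bf n M z y"
  unfolding bf_def by (simp add: algebra_simps sum.distrib)
lemma bf_diff_left: "bf n M (\<lambda>i. x i - y i) z = bf n M x z - bf n M y z"
  unfolding bf_def by (simp add: algebra_simps sum_subtractf)
lemma bf_diff_right: "bf n M z (\<lambda>i. x i - y i) = bf n M z x - bf n M z y"
  unfolding bf_def by (simp add: algebra_simps sum_subtractf)

lemma bf_if_mat: "bf n (\<lambda>i j. if P then A i j else 0) x y = (if P then bf n A x y else 0)"
  unfolding bf_def by simp

lemma bf_cong: "(\<And>p q. p < n \<Longrightarrow> q < n \<Longrightarrow> M p q = M' p q) \<Longrightarrow>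
  (\<And>p. p < n \<Longrightarrow> x p = x' p) \<Longrightarrow> (\<And>p. p < n \<Longrightarrow> y p = y' p) \<Longrightarrow>
  bf n M x y = bf n M' x' y'"
  unfolding bf_def by (intro sum.cong refl) auto

lemma bf_sum:
  assumes "finite S" "finite T"
  shows "bf n M (\<lambda>p. \<Sum>s\<in>S. x s p) (\<lambda>q. \<Sum>t\<in>T. y t q) = (\<Sum>s\<in>S. \<Sum>t\<in>T. bf n M (x s) (y t))"
proof -
  have "bf n M (\<lambda>p. \<Sum>s\<in>S. x s p) (\<lambda>q. \<Sum>t\<in>T. y t q)
     = (\<Sum>p<n. \<Sum>q<n. \<Sum>s\<in>S. \<Sum>t\<in>T. cnj (x s p) * M p q * y t q)"
    unfolding bf_def
    by (intro sum.cong refl) (simp add: sum_distrib_left sum_distrib_right mult.assoc, rule sum.swap)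
  also have "\<dots> = (\<Sum>p<n. \<Sum>s\<in>S. \<Sum>q<n. \<Sum>t\<in>T. cnj (x s p) * M p q * y t q)"
    by (intro sum.cong refl) (rule sum.swap)
  also have "\<dots> = (\<Sum>p<n. \<Sum>s\<in>S. \<Sum>t\<in>T. \<Sum>q<n. cnj (x s p) * M p q * y t q)"
    by (intro sum.cong refl) (rule sum.swap)
  also have "\<dots> = (\<Sum>s\<in>S. \<Sum>p<n. \<Sum>t\<in>T. \<Sum>q<n. cnj (x s p) * M p q * y t q)"
    by (rule sum.swap)
  also have "\<dots> = (\<Sum>s\<in>S. \<Sum>t\<in>T. \<Sum>p<n. \<Sum>q<n. cnj (x s p) * M p q * y t q)"
    by (intro sum.cong refl) (rule sum.swap)
  finally show ?thesis unfolding bf_def .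
qed

lemma nn_add: "nn a \<Longrightarrow> nn b \<Longrightarrow> nn (a + b)" unfolding nn_def by simp
lemma nn_sum: "(\<And>x. x \<in> S \<Longrightarrow> nn (f x)) \<Longrightarrow> nn (sum f S)"
proof (induction S rule: infinite_finite_induct)
  case (insert x F) then show ?case by (simp add: nn_add)
qed (auto simp: nn_def)
lemma nn_scale: "nn a \<Longrightarrow> 0 \<le> r \<Longrightarrow> nn (complex_of_real r * a)" unfolding nn_def by simp
lemma nn_scale_inv: "nn (complex_of_real r * a) \<Longrightarrow> 0 < r \<Longrightarrow> nn a" unfolding nn_def
  by (simp add: zero_le_mult_iff)

lemma psd_pull:
  assumes "psd N M" "finite I" "f ` I \<subseteq> {..<N}"
  shows "nn (\<Sum>x\<in>I. \<Sum>y\<in>I. cnj (c x) * M (f x) (f y) * c y)"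
proof -
  define S where "S z = {x\<in>I. f x = z}" for z
  define v where "v z = (\<Sum>x\<in>S z. c x)" for z
  define G where "G x y = cnj (c x) * M (f x) (f y) * c y" for x y
  have "bf N M v v = (\<Sum>z<N. \<Sum>z'<N. \<Sum>x\<in>S z. \<Sum>y\<in>S z'. G x y)"
    unfolding bf_def v_def
  proof (intro sum.cong refl)
    fix z z'
    have "cnj (\<Sum>x\<in>S z. c x) * M z z' * (\<Sum>y\<in>S z'. c y)
        = (\<Sum>x\<in>S z. \<Sum>y\<in>S z'. cnj (c x) * M z z' * c y)"
      by (simp add: sum_distrib_left sum_distrib_right mult.assoc sum.swap[of _ "S z"])
    also have "\<dots> = (\<Sum>x\<in>S z. \<Sum>y\<in>S z'. G x y)"
      by (intro sum.cong refl) (simp add: G_def S_def)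
    finally show "cnj (\<Sum>x\<in>S z. c x) * M z z' * (\<Sum>y\<in>S z'. c y) = (\<Sum>x\<in>S z. \<Sum>y\<in>S z'. G x y)" .
  qed
  also have "\<dots> = (\<Sum>z<N. \<Sum>x\<in>S z. \<Sum>z'<N. \<Sum>y\<in>S z'. G x y)"
    by (intro sum.cong refl) (rule sum.swap)
  also have "\<dots> = (\<Sum>z<N. \<Sum>x\<in>S z. \<Sum>y\<in>I. G x y)"
    unfolding S_def by (intro sum.cong refl sum.group) (use assms in auto)
  also have "\<dots> = (\<Sum>x\<in>I. \<Sum>y\<in>I. G x y)"
    unfolding S_def by (rule sum.group) (use assms in auto)
  finally show ?thesis using assms(1) unfolding psd_bf G_def by metis
qed

lemma psd_diag:
  assumes "psd n Z" "i < n" shows "nn (Z i i)"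
  using psd_pull[OF assms(1), of "{i}" "\<lambda>x. x" "\<lambda>_. 1"] assms by simp

lemma psd_entry:
  assumes "psd n Z" "i < n" "j < n"
  shows "cmod (Z i j) \<le> Re (Z i i) + Re (Z j j)"
proof (cases "i = j")
  case True
  then show ?thesis using psd_diag[OF assms(1,2)] unfolding nn_def
    by (simp add: cmod_eq_Re)
next
  case False
  have h: "nn (Z i i + Z j j + w * Z i j + cnj w * Z j i)" if "cmod w = 1" for w
  proof -
    have "nn (\<Sum>x\<in>UNIV. \<Sum>y\<in>UNIV. cnj ((\<lambda>b. if b then 1 else w) x) * Z ((\<lambda>b. if b then i else j) x) ((\<lambda>b. if b then i else j) y) * (\<lambda>b. if b then 1 else w) y)"
      by (rule psd_pull[OF assms(1)]) (use assms in auto)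
    moreover have cw: "cnj w * w = 1" using that
      by (metis complex_norm_square mult.commute of_real_1 power_one)
    moreover have "(\<Sum>x\<in>UNIV. \<Sum>y\<in>UNIV. cnj ((\<lambda>b. if b then 1 else w) x) * Z ((\<lambda>b. if b then i else j) x) ((\<lambda>b. if b then i else j) y) * (\<lambda>b. if b then 1 else w) y)
       = Z i i + Z j j + w * Z i j + cnj w * Z j i"
      apply (simp add: UNIV_bool) using cw by simp
    ultimately show ?thesis by simp
  qed
  have h1: "nn (Z i i + Z j j + Z i j + Z j i)" using h[of 1] by simp
  have h2: "nn (Z i i + Z j j - Z i j - Z j i)" using h[of "-1"] by simp
  have h3: "nn (Z i i + Z j j + \<i> * Z i j - \<i> * Z j i)" using h[of "\<i>"] by simp
  have h4: "nn (Z i i + Z j j - \<i> * Z i j + \<i> * Z j i)" using h[of "-\<i>"] by simp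
  have d1: "nn (Z i i)" "nn (Z j j)" using psd_diag assms by auto
  have r1: "\<bar>Re (Z i j)\<bar> \<le> (Re (Z i i) + Re (Z j j)) / 2"
    using h1 h2 h3 h4 d1 unfolding nn_def by auto
  have r2: "\<bar>Im (Z i j)\<bar> \<le> (Re (Z i i) + Re (Z j j)) / 2"
    using h1 h2 h3 h4 d1 unfolding nn_def by auto
  have "\<bar>Re (Z i j)\<bar> + \<bar>Im (Z i j)\<bar> \<le> Re (Z i i) + Re (Z j j)" using add_mono[OF r1 r2] by simp
  then show ?thesis using cmod_le[of "Z i j"] by linarith
qed

lemma pair_lemma:
  fixes d :: nat and w :: "nat \<Rightarrow> nat \<Rightarrow> nat \<Rightarrow> complex"
  assumes p1: "psd n (\<lambda>p q. X p q + Y p q)" and p2: "psd n (\<lambda>p q. X p q - Y p q)"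
  shows "nn (\<Sum>s<d. \<Sum>t<d. bf n X (w s t) (w s t) + bf n Y (w s t) (w t s))"
    and "nn (\<Sum>s<d. \<Sum>t<d. bf n X (w s t) (w s t) - bf n Y (w s t) (w t s))"
proof -
  define A where "A s t = bf n X (w s t) (w s t)" for s t
  define B where "B s t = bf n Y (w s t) (w t s)" for s t
  have e1: "bf n (\<lambda>p q. X p q + Y p q) (\<lambda>i. w s t i + w t s i) (\<lambda>i. w s t i + w t s i)
      + bf n (\<lambda>p q. X p q - Y p q) (\<lambda>i. w s t i - w t s i) (\<lambda>i. w s t i - w t s i)
      = 2 * (A s t + A t s + B s t + B t s)" for s t
    unfolding A_def B_def bf_add_mat bf_diff_mat bf_add_left bf_add_right bf_diff_left bf_diff_right
    by (simp add: algebra_simps)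
  have e2: "bf n (\<lambda>p q. X p q - Y p q) (\<lambda>i. w s t i + w t s i) (\<lambda>i. w s t i + w t s i)
      + bf n (\<lambda>p q. X p q + Y p q) (\<lambda>i. w s t i - w t s i) (\<lambda>i. w s t i - w t s i)
      = 2 * (A s t + A t s - B s t - B t s)" for s t
    unfolding A_def B_def bf_add_mat bf_diff_mat bf_add_left bf_add_right bf_diff_left bf_diff_right
    by (simp add: algebra_simps)
  have sw: "(\<Sum>s<d. \<Sum>t<d. f t s) = (\<Sum>s<d. \<Sum>t<d. f s t)" for f :: "nat \<Rightarrow> nat \<Rightarrow> complex"
    by (rule sum.swap)
  have "nn (\<Sum>s<d. \<Sum>t<d. 2 * (A s t + A t s + B s t + B t s))"
  proof (intro nn_sum)
    fix s t
    show "nn (2 * (A s t + A t s + B s t + B t s))"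
      unfolding e1[symmetric] by (rule nn_add[OF p1[unfolded psd_bf, rule_format] p2[unfolded psd_bf, rule_format]])
  qed
  moreover have "(\<Sum>s<d. \<Sum>t<d. 2 * (A s t + A t s + B s t + B t s)) = complex_of_real 4 * (\<Sum>s<d. \<Sum>t<d. A s t + B s t)"
  proof -
    have "(\<Sum>s<d. \<Sum>t<d. 2 * (A s t + A t s + B s t + B t s)) =
       2 * (\<Sum>s<d. \<Sum>t<d. A s t) + 2 * (\<Sum>s<d. \<Sum>t<d. A t s) + 2 * (\<Sum>s<d. \<Sum>t<d. B s t) + 2 * (\<Sum>s<d. \<Sum>t<d. B t s)"
      by (simp only: sum.distrib sum_subtractf sum_distrib_left distrib_left right_diff_distrib)
    also have "\<dots> = 4 * ((\<Sum>s<d. \<Sum>t<d. A s t) + (\<Sum>s<d. \<Sum>t<d. B s t))"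
      unfolding sw[of A] sw[of B] by (simp add: algebra_simps)
    also have "\<dots> = 4 * (\<Sum>s<d. \<Sum>t<d. A s t + B s t)"
      by (simp only: sum.distrib sum_subtractf)
    finally show ?thesis by simp
  qed
  ultimately have "nn (complex_of_real 4 * (\<Sum>s<d. \<Sum>t<d. A s t + B s t))" by simp
  from nn_scale_inv[OF this] show "nn (\<Sum>s<d. \<Sum>t<d. bf n X (w s t) (w s t) + bf n Y (w s t) (w t s))"
    unfolding A_def B_def by simp
  have "nn (\<Sum>s<d. \<Sum>t<d. 2 * (A s t + A t s - B s t - B t s))"
  proof (intro nn_sum)
    fix s t
    show "nn (2 * (A s t + A t s - B s t - B t s))"
      unfolding e2[symmetric] by (rule nn_add[OF p2[unfolded psd_bf, rule_format] p1[unfolded psd_bf, rule_format]])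
  qed
  moreover have "(\<Sum>s<d. \<Sum>t<d. 2 * (A s t + A t s - B s t - B t s)) = complex_of_real 4 * (\<Sum>s<d. \<Sum>t<d. A s t - B s t)"
  proof -
    have "(\<Sum>s<d. \<Sum>t<d. 2 * (A s t + A t s - B s t - B t s)) =
       2 * (\<Sum>s<d. \<Sum>t<d. A s t) + 2 * (\<Sum>s<d. \<Sum>t<d. A t s) - 2 * (\<Sum>s<d. \<Sum>t<d. B s t) - 2 * (\<Sum>s<d. \<Sum>t<d. B t s)"
      by (simp only: sum.distrib sum_subtractf sum_distrib_left distrib_left right_diff_distrib)
    also have "\<dots> = 4 * ((\<Sum>s<d. \<Sum>t<d. A s t) - (\<Sum>s<d. \<Sum>t<d. B s t))"
      unfolding sw[of A] sw[of B] by (simp add: algebra_simps)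
    also have "\<dots> = 4 * (\<Sum>s<d. \<Sum>t<d. A s t - B s t)"
      by (simp only: sum.distrib sum_subtractf)
    finally show ?thesis by simp
  qed
  ultimately have "nn (complex_of_real 4 * (\<Sum>s<d. \<Sum>t<d. A s t - B s t))" by simp
  from nn_scale_inv[OF this] show "nn (\<Sum>s<d. \<Sum>t<d. bf n X (w s t) (w s t) - bf n Y (w s t) (w t s))"
    unfolding A_def B_def by simp
qed

lemma convexity:
  fixes d :: nat
  assumes "psd n M"
  shows "Re (bf n M (\<lambda>p. \<Sum>s<d. x s p) (\<lambda>p. \<Sum>s<d. x s p)) \<le> real d * (\<Sum>s<d. Re (bf n M (x s) (x s)))"
proof -
  define Q where "Q s t = bf n M (x s) (x t)" for s t
  have "nn (\<Sum>s<d. \<Sum>t<d. bf n M (\<lambda>i. x s i - x t i) (\<lambda>i. x s i - x t i))"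
    by (intro nn_sum) (rule assms[unfolded psd_bf, rule_format])
  moreover have "(\<Sum>s<d. \<Sum>t<d. bf n M (\<lambda>i. x s i - x t i) (\<lambda>i. x s i - x t i))
     = 2 * (of_nat d * (\<Sum>s<d. Q s s)) - 2 * (\<Sum>s<d. \<Sum>t<d. Q s t)"
  proof -
    have "(\<Sum>s<d. \<Sum>t<d. bf n M (\<lambda>i. x s i - x t i) (\<lambda>i. x s i - x t i))
      = (\<Sum>s<d. \<Sum>t<d. Q s s + Q t t - Q s t - Q t s)"
      unfolding bf_diff_left bf_diff_right Q_def by (simp add: algebra_simps)
    also have "\<dots> = (\<Sum>s<d. \<Sum>t<d. Q s s) + (\<Sum>s<d. \<Sum>t<d. Q t t)
         - (\<Sum>s<d. \<Sum>t<d. Q s t) - (\<Sum>s<d. \<Sum>t<d. Q t s)"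
      by (simp only: sum.distrib sum_subtractf)
    also have "(\<Sum>s<d. \<Sum>t<d. Q t s) = (\<Sum>s<d. \<Sum>t<d. Q s t)"
      by (rule sum.swap)
    also have "(\<Sum>s<d. \<Sum>t<d. Q t t) = of_nat d * (\<Sum>s<d. Q s s)"
      by simp
    also have "(\<Sum>s<d. \<Sum>t<d. Q s s) = of_nat d * (\<Sum>s<d. Q s s)"
      by (simp add: sum_distrib_left)
    finally show ?thesis by (simp add: algebra_simps)
  qed
  moreover have "(\<Sum>s<d. \<Sum>t<d. Q s t) = bf n M (\<lambda>p. \<Sum>s<d. x s p) (\<lambda>p. \<Sum>s<d. x s p)"
    unfolding Q_def by (rule bf_sum[symmetric]) auto
  ultimately show ?thesis unfolding nn_def Q_def by (simp add: Re_sum)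
qed



lemma sum_split_mult:
  fixes h :: "nat \<Rightarrow> 'a::comm_monoid_add"
  shows "(\<Sum>p<m*n. h p) = (\<Sum>i<m. \<Sum>j<n. h (i*n+j))"
proof (induction m)
  case 0 then show ?case by simp
next
  case (Suc m)
  have e: "{..<Suc m * n} = {..<m*n} \<union> {m*n..<m*n+n}" by auto
  have "(\<Sum>p<Suc m*n. h p) = (\<Sum>p<m*n. h p) + (\<Sum>p\<in>{m*n..<m*n+n}. h p)"
    unfolding e by (rule sum.union_disjoint) auto
  also have "(\<Sum>p\<in>{m*n..<m*n+n}. h p) = (\<Sum>j<n. h (m*n+j))"
    using sum.shift_bounds_nat_ivl[of h 0 "m*n" n]
    by (simp add: atLeast0LessThan add.commute)
  finally show ?case using Suc by simp
qed

definition E :: "nat \<Rightarrow> nat \<Rightarrow> nat \<Rightarrow> nat \<Rightarrow> nat \<Rightarrow> nat" where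
  "E b d p s t = ((p div b) * d + s) * (b * d) + (p mod b) * d + t"

lemma E_decode:
  assumes "0 < b" "s < d" "t < d"
  shows "E b d p s t div (b * d) = (p div b) * d + s"
    and "E b d p s t mod (b * d) = (p mod b) * d + t"
    and "((p div b) * d + s) div d = p div b" and "((p div b) * d + s) mod d = s"
    and "((p mod b) * d + t) div d = p mod b" and "((p mod b) * d + t) mod d = t"
proof -
  have lt: "(p mod b) * d + t < b * d"
  proof -
    have "p mod b + 1 \<le> b" using assms(1) by (simp add: Suc_leI)
    then have "(p mod b + 1) * d \<le> b * d" by (rule mult_right_mono) simp
    then show ?thesis using assms(3) by (simp add: algebra_simps)
  qed
  have "b * d \<noteq> 0" using assms by simp
  then show "E b d p s t div (b * d) = (p div b) * d + s"
    unfolding E_def using lt by (simp add: add.assoc)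
  show "E b d p s t mod (b * d) = (p mod b) * d + t"
    unfolding E_def using lt by (simp add: add.assoc)
  show "((p div b) * d + s) div d = p div b" "((p div b) * d + s) mod d = s"
    "((p mod b) * d + t) div d = p mod b" "((p mod b) * d + t) mod d = t"
    using assms by simp_all
qed

lemma E_less:
  assumes "0 < b" "s < d" "t < d" "p < a * b"
  shows "E b d p s t < (a * d) * (b * d)"
proof -
  have "p div b < a" using assms by (simp add: less_mult_imp_div_less)
  then have "p div b * d + s < a * d"
  proof -
    have "p div b + 1 \<le> a" using \<open>p div b < a\<close> by simp
    then have "(p div b + 1) * d \<le> a * d" by (rule mult_right_mono) simp
    then show ?thesis using assms(2) by (simp add: algebra_simps)
  qed
  moreover have "E b d p s t div (b * d) = (p div b) * d + s" by (rule E_decode(1)[OF assms(1-3)])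
  moreover have "0 < b * d" using assms by simp
  ultimately show ?thesis
    by (metis div_less_iff_less_mult mult.commute)
qed

lemma E_split:
  assumes "0 < b" "j < b"
  shows "E b d (i * b + j) s t = (i * d + s) * (b * d) + (j * d + t)"
  unfolding E_def using assms by simp

lemma bigdecomp:
  fixes h :: "nat \<Rightarrow> 'a::comm_monoid_add"
  assumes "0 < b"
  shows "(\<Sum>p'<(a*d)*(b*d). h p') = (\<Sum>s<d. \<Sum>t<d. \<Sum>p<a*b. h (E b d p s t))"
proof -
  have "(\<Sum>p'<(a*d)*(b*d). h p') = (\<Sum>P<a*d. \<Sum>x<b*d. h (P*(b*d)+x))"
    by (rule sum_split_mult)
  also have "\<dots> = (\<Sum>i<a. \<Sum>s<d. \<Sum>j<b. \<Sum>t<d. h ((i*d+s)*(b*d)+(j*d+t)))"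
    by (simp only: sum_split_mult)
  also have "\<dots> = (\<Sum>s<d. \<Sum>i<a. \<Sum>j<b. \<Sum>t<d. h ((i*d+s)*(b*d)+(j*d+t)))"
    by (rule sum.swap)
  also have "\<dots> = (\<Sum>s<d. \<Sum>i<a. \<Sum>t<d. \<Sum>j<b. h ((i*d+s)*(b*d)+(j*d+t)))"
    by (rule sum.cong[OF refl], rule sum.cong[OF refl], rule sum.swap)
  also have "\<dots> = (\<Sum>s<d. \<Sum>t<d. \<Sum>i<a. \<Sum>j<b. h ((i*d+s)*(b*d)+(j*d+t)))"
    by (rule sum.cong[OF refl], rule sum.swap)
  also have "\<dots> = (\<Sum>s<d. \<Sum>t<d. \<Sum>i<a. \<Sum>j<b. h (E b d (i*b+j) s t))"
    by (intro sum.cong refl) (simp add: E_split[OF assms])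
  also have "\<dots> = (\<Sum>s<d. \<Sum>t<d. \<Sum>p<a*b. h (E b d p s t))"
    by (simp only: sum_split_mult)
  finally show ?thesis .
qed

lemma bigdecomp2:
  fixes F :: "nat \<Rightarrow> nat \<Rightarrow> 'a::comm_monoid_add"
  assumes "0 < b"
  shows "(\<Sum>p'<(a*d)*(b*d). \<Sum>q'<(a*d)*(b*d). F p' q') =
    (\<Sum>s<d. \<Sum>t<d. \<Sum>s'<d. \<Sum>t'<d. \<Sum>p<a*b. \<Sum>q<a*b. F (E b d p s t) (E b d q s' t'))"
proof -
  have "(\<Sum>p'<(a*d)*(b*d). \<Sum>q'<(a*d)*(b*d). F p' q') =
     (\<Sum>s<d. \<Sum>t<d. \<Sum>p<a*b. \<Sum>s'<d. \<Sum>t'<d. \<Sum>q<a*b. F (E b d p s t) (E b d q s' t'))"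
    by (simp only: bigdecomp[OF assms])
  also have "\<dots> = (\<Sum>s<d. \<Sum>t<d. \<Sum>s'<d. \<Sum>p<a*b. \<Sum>t'<d. \<Sum>q<a*b. F (E b d p s t) (E b d q s' t'))"
    by (rule sum.cong[OF refl], rule sum.cong[OF refl], rule sum.swap)
  also have "\<dots> = (\<Sum>s<d. \<Sum>t<d. \<Sum>s'<d. \<Sum>t'<d. \<Sum>p<a*b. \<Sum>q<a*b. F (E b d p s t) (E b d q s' t'))"
    by (rule sum.cong[OF refl], rule sum.cong[OF refl], rule sum.cong[OF refl], rule sum.swap)
  finally show ?thesis .
qed

lemma bf_big:
  assumes "0 < b"
  shows "bf ((a*d)*(b*d)) M v w =
    (\<Sum>s<d. \<Sum>t<d. \<Sum>s'<d. \<Sum>t'<d. bf (a*b) (\<lambda>p q. M (E b d p s t) (E b d q s' t')) (\<lambda>p. v (E b d p s t)) (\<lambda>q. w (E b d q s' t')))"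
  unfolding bf_def by (rule bigdecomp2[OF assms])

lemma trace_big:
  assumes "0 < b"
  shows "trace ((a*d)*(b*d)) (mmult ((a*d)*(b*d)) A B) =
    (\<Sum>s<d. \<Sum>t<d. \<Sum>s'<d. \<Sum>t'<d. \<Sum>p<a*b. \<Sum>q<a*b. A (E b d p s t) (E b d q s' t') * B (E b d q s' t') (E b d p s t))"
  unfolding trace_def mmult_def by (rule bigdecomp2[OF assms])

lemma trace_small:
  "trace n (mmult n A B) = (\<Sum>p<n. \<Sum>q<n. A p q * B q p)"
  unfolding trace_def mmult_def ..



lemma collapse2:
  fixes H :: "nat \<Rightarrow> nat \<Rightarrow> 'a::comm_monoid_add"
  assumes "u < d" "v < d"
  shows "(\<Sum>s'<d. \<Sum>t'<d. if s' = u \<and> t' = v then H s' t' else 0) = H u v"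
proof -
  have "(\<Sum>t'<d. if s' = u \<and> t' = v then H s' t' else 0) = (if s' = u then H s' v else 0)" for s'
    by (cases "s' = u") (simp_all add: assms)
  then show ?thesis using assms by simp
qed

lemma sum4_P2:
  fixes H :: "nat \<Rightarrow> nat \<Rightarrow> nat \<Rightarrow> nat \<Rightarrow> 'a::comm_monoid_add"
  shows "(\<Sum>s<d. \<Sum>t<d. \<Sum>s'<d. \<Sum>t'<d. if s' = s \<and> t' = t then H s t s' t' else 0) = (\<Sum>s<d. \<Sum>t<d. H s t s t)"
  by (intro sum.cong refl) (simp only: collapse2 lessThan_iff)

lemma sum4_P3:
  fixes H :: "nat \<Rightarrow> nat \<Rightarrow> nat \<Rightarrow> nat \<Rightarrow> 'a::comm_monoid_add"
  shows "(\<Sum>s<d. \<Sum>t<d. \<Sum>s'<d. \<Sum>t'<d. if s' = t \<and> t' = s then H s t s' t' else 0) = (\<Sum>s<d. \<Sum>t<d. H s t t s)"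
  by (intro sum.cong refl) (simp only: collapse2 lessThan_iff)

lemma sum4_point:
  fixes H :: "nat \<Rightarrow> nat \<Rightarrow> nat \<Rightarrow> nat \<Rightarrow> 'a::comm_monoid_add"
  assumes "s0 < d" "t0 < d" "s1 < d" "t1 < d"
  shows "(\<Sum>s<d. \<Sum>t<d. \<Sum>s'<d. \<Sum>t'<d. if s = s0 \<and> t = t0 \<and> s' = s1 \<and> t' = t1 then H s t s' t' else 0) = H s0 t0 s1 t1"
proof -
  have "(\<Sum>s'<d. \<Sum>t'<d. if s = s0 \<and> t = t0 \<and> s' = s1 \<and> t' = t1 then H s t s' t' else 0)
     = (if s = s0 \<and> t = t0 then H s t s1 t1 else 0)" for s t
    by (cases "s = s0"; cases "t = t0") (simp_all add: collapse2 assms)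
  then have "(\<Sum>s<d. \<Sum>t<d. \<Sum>s'<d. \<Sum>t'<d. if s = s0 \<and> t = t0 \<and> s' = s1 \<and> t' = t1 then H s t s' t' else 0)
     = (\<Sum>s<d. \<Sum>t<d. if s = s0 \<and> t = t0 then H s t s1 t1 else 0)" by simp
  also have "\<dots> = H s0 t0 s1 t1" by (rule collapse2[OF assms(1,2)])
  finally show ?thesis .
qed

lemma sum4_P1:
  fixes H :: "nat \<Rightarrow> nat \<Rightarrow> nat \<Rightarrow> nat \<Rightarrow> 'a::comm_monoid_add"
  shows "(\<Sum>s<d. \<Sum>t<d. \<Sum>s'<d. \<Sum>t'<d. if t = s \<and> t' = s' then H s t s' t' else 0) = (\<Sum>s<d. \<Sum>s'<d. H s s s' s')"
proof (rule sum.cong[OF refl])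
  fix s assume s: "s \<in> {..<d}"
  have i1: "(\<Sum>t'<d. if t = s \<and> t' = s' then H s t s' t' else 0) = (if t = s then H s t s' s' else 0)"
    if "s' < d" for t s' by (cases "t = s") (simp_all add: that)
  have i2: "(\<Sum>s'<d. \<Sum>t'<d. if t = s \<and> t' = s' then H s t s' t' else 0) = (if t = s then (\<Sum>s'<d. H s t s' s') else 0)" for t
    by (cases "t = s") (simp_all add: i1)
  show "(\<Sum>t<d. \<Sum>s'<d. \<Sum>t'<d. if t = s \<and> t' = s' then H s t s' t' else 0) = (\<Sum>s'<d. H s s s' s')"
    using s by (simp add: i2)
qed

lemma bf_if_vec: "bf n M (\<lambda>p. if C then x p else 0) (\<lambda>q. if C' then y q else 0) = (if C \<and> C' then bf n M x y else 0)"
  unfolding bf_def by (cases C; cases C') simp_all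

section \<open>Entries at encoded indices\<close>

lemma small_decode: "p div b * b + p mod b = (p::nat)" by (rule div_mult_mod_eq)

lemma eq_dm:
  fixes x y t t' d :: nat
  assumes "t < d" "t' < d"
  shows "(x * d + t = y * d + t') \<longleftrightarrow> (x = y \<and> t = t')"
proof
  assume h: "x * d + t = y * d + t'"
  have "(x * d + t) div d = x" "(y * d + t') div d = y" "(x * d + t) mod d = t" "(y * d + t') mod d = t'"
    using assms by simp_all
  then show "x = y \<and> t = t'" using h by metis
qed auto

lemma choi_big:
  assumes "0 < b" "s < d" "t < d" "s' < d" "t' < d"
  shows "choi (b*d) (tensor_map d d U id_units) (E b d p s t) (E b d q s' t') =
     (if t = s \<and> t' = s' then choi b U p q else 0)"
  unfolding choi_def tensor_map_def kron_def id_units_def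
  using assms by (simp add: E_decode)

lemma kron_big:
  assumes "0 < b" "s < d" "t < d" "s' < d" "t' < d"
  shows "kron (b*d) R (idm (b*d)) (E b d p s t) (E b d q s' t') =
     (if p mod b = q mod b \<and> t = t' then R (p div b * d + s) (q div b * d + s') else 0)"
  unfolding kron_def idm_def
  using assms by (simp add: E_decode eq_dm)

lemma ptrans_big:
  assumes "0 < b" "s < d" "t < d" "s' < d" "t' < d"
  shows "ptrans (b*d) W (E b d p s t) (E b d q s' t') =
     W (E b d (p div b * b + q mod b) s t') (E b d (q div b * b + p mod b) s' t)"
proof -
  have "0 < b * d" using assms by simp
  have m1: "(p div b * b + q mod b) div b = p div b" "(p div b * b + q mod b) mod b = q mod b"
    "(q div b * b + p mod b) div b = q div b" "(q div b * b + p mod b) mod b = p mod b"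
    using assms by simp_all
  show ?thesis
    unfolding ptrans_def E_decode(1,2)[OF assms(1,2,3)] E_decode(1,2)[OF assms(1,4,5)]
    unfolding E_def m1 by (simp add: algebra_simps)
qed



lemma sum4_cong_if:
  fixes G :: "nat \<Rightarrow> nat \<Rightarrow> nat \<Rightarrow> nat \<Rightarrow> complex"
  assumes "\<And>s t s' t'. s < d \<Longrightarrow> t < d \<Longrightarrow> s' < d \<Longrightarrow> t' < d \<Longrightarrow> G s t s' t' = (if C s t s' t' then H s t s' t' else 0)"
  shows "(\<Sum>s<d. \<Sum>t<d. \<Sum>s'<d. \<Sum>t'<d. G s t s' t') = (\<Sum>s<d. \<Sum>t<d. \<Sum>s'<d. \<Sum>t'<d. if C s t s' t' then H s t s' t' else 0)"
  using assms by (intro sum.cong refl) auto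

lemma bf_big_if:
  assumes b: "0 < b"
    and h: "\<And>p q s t s' t'. s < d \<Longrightarrow> t < d \<Longrightarrow> s' < d \<Longrightarrow> t' < d \<Longrightarrow>
       M' (E b d p s t) (E b d q s' t') = (if C s t s' t' then c * M p q else 0)"
  shows "bf ((a*d)*(b*d)) M' v v' = (\<Sum>s<d. \<Sum>t<d. \<Sum>s'<d. \<Sum>t'<d.
     if C s t s' t' then c * bf (a*b) M (\<lambda>p. v (E b d p s t)) (\<lambda>p. v' (E b d p s' t')) else 0)"
  unfolding bf_big[OF b]
proof (rule sum4_cong_if)
  fix s t s' t' assume "s < d" "t < d" "s' < d" "t' < d"
  then have "bf (a*b) (\<lambda>p q. M' (E b d p s t) (E b d q s' t')) (\<lambda>p. v (E b d p s t)) (\<lambda>q. v' (E b d q s' t'))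
     = bf (a*b) (\<lambda>p q. if C s t s' t' then c * M p q else 0) (\<lambda>p. v (E b d p s t)) (\<lambda>q. v' (E b d q s' t'))"
    by (intro bf_cong) (simp_all add: h)
  then show "bf (a*b) (\<lambda>p q. M' (E b d p s t) (E b d q s' t')) (\<lambda>p. v (E b d p s t)) (\<lambda>q. v' (E b d q s' t'))
     = (if C s t s' t' then c * bf (a*b) M (\<lambda>p. v (E b d p s t)) (\<lambda>p. v' (E b d p s' t')) else 0)"
    by (simp add: bf_if_mat bf_smult_mat)
qed

lemma patP1:
  assumes b: "0 < b"
    and h: "\<And>p q s t s' t'. s < d \<Longrightarrow> t < d \<Longrightarrow> s' < d \<Longrightarrow> t' < d \<Longrightarrow>
       M' (E b d p s t) (E b d q s' t') = (if t = s \<and> t' = s' then c * M p q else 0)"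
  shows "bf ((a*d)*(b*d)) M' v v = c * (\<Sum>s<d. \<Sum>s'<d. bf (a*b) M (\<lambda>p. v (E b d p s s)) (\<lambda>p. v (E b d p s' s')))"
  apply (subst bf_big_if[where C="\<lambda>s t s' t'. t = s \<and> t' = s'", OF b h])
   apply assumption+
  apply (subst sum4_P1) apply (simp add: sum_distrib_left)
  done

lemma patP2:
  assumes b: "0 < b"
    and h: "\<And>p q s t s' t'. s < d \<Longrightarrow> t < d \<Longrightarrow> s' < d \<Longrightarrow> t' < d \<Longrightarrow>
       M' (E b d p s t) (E b d q s' t') = (if s' = s \<and> t' = t then c * M p q else 0)"
  shows "bf ((a*d)*(b*d)) M' v v = c * (\<Sum>s<d. \<Sum>t<d. bf (a*b) M (\<lambda>p. v (E b d p s t)) (\<lambda>p. v (E b d p s t)))"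
  apply (subst bf_big_if[where C="\<lambda>s t s' t'. s' = s \<and> t' = t", OF b h])
   apply assumption+
  apply (subst sum4_P2) apply (simp add: sum_distrib_left)
  done

lemma patP3:
  assumes b: "0 < b"
    and h: "\<And>p q s t s' t'. s < d \<Longrightarrow> t < d \<Longrightarrow> s' < d \<Longrightarrow> t' < d \<Longrightarrow>
       M' (E b d p s t) (E b d q s' t') = (if s' = t \<and> t' = s then c * M p q else 0)"
  shows "bf ((a*d)*(b*d)) M' v v = c * (\<Sum>s<d. \<Sum>t<d. bf (a*b) M (\<lambda>p. v (E b d p s t)) (\<lambda>p. v (E b d p t s)))"
  apply (subst bf_big_if[where C="\<lambda>s t s' t'. s' = t \<and> t' = s", OF b h])
   apply assumption+
  apply (subst sum4_P3) apply (simp add: sum_distrib_left)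
  done



definition rhoB :: "nat \<Rightarrow> cmat \<Rightarrow> cmat" where
  "rhoB d \<rho> = (\<lambda>P Q. if P mod d = Q mod d then \<rho> (P div d) (Q div d) / of_nat d else 0)"

definition WB :: "nat \<Rightarrow> nat \<Rightarrow> cmat \<Rightarrow> cmat" where
  "WB b d W = (\<lambda>x y. if x div (b*d) mod d = x mod (b*d) mod d \<and> y div (b*d) mod d = y mod (b*d) mod d
     then W (x div (b*d) div d * b + x mod (b*d) div d) (y div (b*d) div d * b + y mod (b*d) div d) / (of_nat d)^2 else 0)"

lemma WB_E:
  assumes "0 < b" "s < d" "t < d" "s' < d" "t' < d"
  shows "WB b d W (E b d p s t) (E b d q s' t') = (if t = s \<and> t' = s' then complex_of_real (1 / real d ^ 2) * W p q else 0)"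
  unfolding WB_def E_decode[OF assms(1,2,3)] E_decode[OF assms(1,4,5)]
  by (auto simp: divide_inverse mult.commute)

lemma KB_E:
  assumes "0 < b" "s < d" "t < d" "s' < d" "t' < d"
  shows "kron (b*d) (rhoB d \<rho>) (idm (b*d)) (E b d p s t) (E b d q s' t') =
    (if s' = s \<and> t' = t then complex_of_real (1 / real d) * kron b \<rho> (idm b) p q else 0)"
  apply (subst kron_big[OF assms])
  unfolding rhoB_def kron_def idm_def
  using assms by (auto simp: divide_inverse mult.commute)

lemma YB_E:
  assumes "0 < b" "s < d" "t < d" "s' < d" "t' < d"
  shows "ptrans (b*d) (WB b d W) (E b d p s t) (E b d q s' t') =
    (if s' = t \<and> t' = s then complex_of_real (1 / real d ^ 2) * ptrans b W p q else 0)"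
  unfolding ptrans_big[OF assms] WB_E[OF assms(1,2,5,4,3)]
  by (auto simp: ptrans_def)

lemma JB_E:
  assumes "0 < b" "s < d" "t < d" "s' < d" "t' < d"
  shows "choi (b*d) (tensor_map d d U id_units) (E b d p s t) (E b d q s' t') *
     WB b d W (E b d q s' t') (E b d p s t) =
    (if t = s \<and> t' = s' then complex_of_real (1 / real d ^ 2) * (choi b U p q * W q p) else 0)"
  unfolding choi_big[OF assms] WB_E[OF assms(1,4,5,2,3)]
  by auto


lemma bf_zero_mat: "bf n (\<lambda>_ _. 0) x y = 0" unfolding bf_def by simp

lemma feas_unfold:
  assumes "pptp_feasible a b k \<rho> W"
  shows "\<And>v. nn (bf (a*b) W v v)"
    and "\<And>v. nn (bf (a*b) (kron b \<rho> (idm b)) v v - bf (a*b) W v v)"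
    and "trace a \<rho> = 1"
    and "\<And>v. nn (bf (a*b) (ptrans b W) v v + complex_of_real (1/k) * bf (a*b) (kron b \<rho> (idm b)) v v)"
    and "\<And>v. nn (complex_of_real (1/k) * bf (a*b) (kron b \<rho> (idm b)) v v - bf (a*b) (ptrans b W) v v)"
  using assms unfolding pptp_feasible_def loewner_bf bf_msmult bf_zero_mat by auto

lemma feas_fold:
  assumes "\<And>v. nn (bf (a*b) W v v)"
    and "\<And>v. nn (bf (a*b) (kron b \<rho> (idm b)) v v - bf (a*b) W v v)"
    and "trace a \<rho> = 1"
    and "\<And>v. nn (bf (a*b) (ptrans b W) v v + complex_of_real (1/k) * bf (a*b) (kron b \<rho> (idm b)) v v)"
    and "\<And>v. nn (complex_of_real (1/k) * bf (a*b) (kron b \<rho> (idm b)) v v - bf (a*b) (ptrans b W) v v)"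
  shows "pptp_feasible a b k \<rho> W"
  using assms unfolding pptp_feasible_def loewner_bf bf_msmult bf_zero_mat by auto

lemma dirB_trace:
  assumes b: "0 < b" and d: "0 < d"
  shows "trace ((a*d)*(b*d)) (mmult ((a*d)*(b*d)) (choi (b*d) (tensor_map d d U id_units)) (WB b d W))
       = trace (a*b) (mmult (a*b) (choi b U) W)"
proof -
  let ?c = "complex_of_real (1 / real d ^ 2)"
  let ?T = "(\<Sum>p<a*b. \<Sum>q<a*b. choi b U p q * W q p)"
  have "trace ((a*d)*(b*d)) (mmult ((a*d)*(b*d)) (choi (b*d) (tensor_map d d U id_units)) (WB b d W))
     = (\<Sum>s<d. \<Sum>t<d. \<Sum>s'<d. \<Sum>t'<d. if t = s \<and> t' = s' then ?c * ?T else 0)"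
    unfolding trace_big[OF b]
  proof (rule sum4_cong_if)
    fix s t s' t' assume h: "s < d" "t < d" "s' < d" "t' < d"
    show "(\<Sum>p<a*b. \<Sum>q<a*b. choi (b*d) (tensor_map d d U id_units) (E b d p s t) (E b d q s' t') *
       WB b d W (E b d q s' t') (E b d p s t)) = (if t = s \<and> t' = s' then ?c * ?T else 0)"
      unfolding JB_E[OF b h] by (cases "t = s"; cases "t' = s'") (simp_all add: sum_distrib_left)
  qed
  also have "\<dots> = (\<Sum>s<d. \<Sum>s'<d. ?c * ?T)" by (rule sum4_P1)
  also have "\<dots> = ?T" using d by (simp add: power2_eq_square)
  finally show ?thesis unfolding trace_small .
qed


lemma trace_rhoB:
  assumes d: "0 < d" and tr: "trace a \<rho> = 1"
  shows "trace (a*d) (rhoB d \<rho>) = 1"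
proof -
  have "trace (a*d) (rhoB d \<rho>) = (\<Sum>i<a. \<Sum>s<d. rhoB d \<rho> (i*d+s) (i*d+s))"
    unfolding trace_def by (rule sum_split_mult)
  also have "\<dots> = (\<Sum>i<a. \<Sum>s<d. \<rho> i i / of_nat d)"
    by (intro sum.cong refl) (simp add: rhoB_def)
  also have "\<dots> = (\<Sum>i<a. \<rho> i i)" using d by simp
  finally show ?thesis using tr unfolding trace_def by simp
qed

lemma dirB_feas:
  assumes b: "0 < b" and d: "0 < d" and k: "0 < k" and F: "pptp_feasible a b k \<rho> W"
  shows "pptp_feasible (a*d) (b*d) (k * real d) (rhoB d \<rho>) (WB b d W)"
proof -
  define n where "n = a*b"
  define K where "K = kron b \<rho> (idm b)"
  define Y where "Y = ptrans b W"
  define K' where "K' = kron (b*d) (rhoB d \<rho>) (idm (b*d))"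
  define W' where "W' = WB b d W"
  define Y' where "Y' = ptrans (b*d) W'"
  let ?N = "(a*d)*(b*d)"
  let ?c1 = "complex_of_real (1 / real d)"
  let ?c2 = "complex_of_real (1 / real d ^ 2)"
  note F1 = feas_unfold(1)[OF F, folded n_def]
  note F2 = feas_unfold(2)[OF F, folded n_def K_def]
  note F3 = feas_unfold(3)[OF F]
  note F4 = feas_unfold(4)[OF F, folded n_def K_def Y_def]
  note F5 = feas_unfold(5)[OF F, folded n_def K_def Y_def]
  have psdK: "nn (bf n K x x)" for x
    using nn_add[OF F1[of x] F2[of x]] by simp
  have psdKW: "psd n (\<lambda>p q. K p q - W p q)"
    unfolding psd_bf bf_diff_mat using F2 by simp
  have psdK': "psd n K" unfolding psd_bf using psdK by simp
  have pXY1: "psd n (\<lambda>p q. complex_of_real (1/k) * K p q + Y p q)"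
    unfolding psd_bf bf_add_mat bf_smult_mat using F4 by (simp add: add.commute)
  have pXY2: "psd n (\<lambda>p q. complex_of_real (1/k) * K p q - Y p q)"
    unfolding psd_bf bf_diff_mat bf_smult_mat using F5 by simp
  define w where "w v s t = (\<lambda>p. v (E b d p s t))" for v :: "nat \<Rightarrow> complex" and s t
  define u where "u v = (\<lambda>p. \<Sum>s<d. w v s s p)" for v
  have eW: "bf ?N W' v v = ?c2 * bf n W (u v) (u v)" for v
  proof -
    have "bf ?N W' v v = ?c2 * (\<Sum>s<d. \<Sum>s'<d. bf n W (w v s s) (w v s' s'))"
      unfolding W'_def n_def w_def by (rule patP1[OF b]) (rule WB_E[OF b])
    also have "(\<Sum>s<d. \<Sum>s'<d. bf n W (w v s s) (w v s' s')) = bf n W (u v) (u v)"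
      unfolding u_def by (rule bf_sum[symmetric]) auto
    finally show ?thesis .
  qed
  have eK: "bf ?N K' v v = ?c1 * (\<Sum>s<d. \<Sum>t<d. bf n K (w v s t) (w v s t))" for v
    unfolding K'_def n_def w_def K_def by (rule patP2[OF b]) (rule KB_E[OF b])
  have eY: "bf ?N Y' v v = ?c2 * (\<Sum>s<d. \<Sum>t<d. bf n Y (w v s t) (w v t s))" for v
    unfolding Y'_def W'_def n_def w_def Y_def by (rule patP3[OF b]) (rule YB_E[OF b])
  have G1: "nn (bf ?N W' v v)" for v
    unfolding eW by (rule nn_scale) (use F1 in auto)
  have G2: "nn (bf ?N K' v v - bf ?N W' v v)" for v
  proof -
    define A where "A s t = bf n K (w v s t) (w v s t)" for s t
    have A0: "Im (A s t) = 0" "0 \<le> Re (A s t)" for s t using psdK[of "w v s t"] unfolding A_def nn_def by auto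
    define S1 where "S1 = (\<Sum>s<d. Re (A s s))"
    define S2 where "S2 = (\<Sum>s<d. \<Sum>t<d. Re (A s t))"
    define RK where "RK = Re (bf n K (u v) (u v))"
    define RW where "RW = Re (bf n W (u v) (u v))"
    have r1: "S1 \<le> S2" unfolding S1_def S2_def
      by (intro sum_mono member_le_sum) (auto simp: A0)
    have r2: "RK \<le> real d * S1" unfolding RK_def S1_def A_def u_def
      by (rule convexity[OF psdK'])
    have r3: "RW \<le> RK" using F2[of "u v"] unfolding RK_def RW_def nn_def by simp
    have eK': "Re (bf ?N K' v v) = S2 / real d" "Im (bf ?N K' v v) = 0"
      unfolding eK S2_def A_def[symmetric] by (simp_all add: Re_sum Im_sum A0)
    have eW': "Re (bf ?N W' v v) = RW / (real d)^2" "Im (bf ?N W' v v) = 0"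
      unfolding eW RW_def using F1[of "u v"] by (simp_all add: nn_def)
    have "RW / (real d)^2 \<le> (real d * S1) / (real d)^2"
      using r2 r3 by (intro divide_right_mono) auto
    also have "\<dots> = S1 / real d" using d by (simp add: power2_eq_square)
    also have "\<dots> \<le> S2 / real d" using r1 by (intro divide_right_mono) auto
    finally show ?thesis unfolding nn_def using eK' eW' by simp
  qed
  have cc: "complex_of_real (1 / (k * real d)) * ?c1 = ?c2 * complex_of_real (1/k)"
    unfolding of_real_mult[symmetric] by (simp add: power2_eq_square)
  have G4: "nn (bf ?N Y' v v + complex_of_real (1 / (k * real d)) * bf ?N K' v v)" for v
  proof -
    have e: "bf ?N Y' v v + complex_of_real (1 / (k * real d)) * bf ?N K' v v
      = ?c2 * (\<Sum>s<d. \<Sum>t<d. bf n (\<lambda>p q. complex_of_real (1/k) * K p q) (w v s t) (w v s t) + bf n Y (w v s t) (w v t s))"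
    proof -
      have m: "complex_of_real (1 / (k * real d)) * (?c1 * X) = ?c2 * (complex_of_real (1/k) * X)" for X
        using cc by (metis mult.assoc)
      show ?thesis unfolding eY eK m bf_smult_mat
        by (simp only: sum.distrib sum_distrib_left distrib_left add.commute)
    qed
    have nS: "nn (\<Sum>s<d. \<Sum>t<d. bf n (\<lambda>p q. complex_of_real (1/k) * K p q) (w v s t) (w v s t) + bf n Y (w v s t) (w v t s))"
      by (rule pair_lemma(1)[OF pXY1 pXY2])
    have pos: "0 \<le> 1 / real d ^ 2" by simp
    show ?thesis unfolding e by (rule nn_scale[OF nS pos])
  qed
  have G5: "nn (complex_of_real (1 / (k * real d)) * bf ?N K' v v - bf ?N Y' v v)" for v
  proof -
    have e: "complex_of_real (1 / (k * real d)) * bf ?N K' v v - bf ?N Y' v v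
      = ?c2 * (\<Sum>s<d. \<Sum>t<d. bf n (\<lambda>p q. complex_of_real (1/k) * K p q) (w v s t) (w v s t) - bf n Y (w v s t) (w v t s))"
    proof -
      have m: "complex_of_real (1 / (k * real d)) * (?c1 * X) = ?c2 * (complex_of_real (1/k) * X)" for X
        using cc by (metis mult.assoc)
      show ?thesis unfolding eY eK m bf_smult_mat
        by (simp only: sum_subtractf sum_distrib_left right_diff_distrib)
    qed
    have nS: "nn (\<Sum>s<d. \<Sum>t<d. bf n (\<lambda>p q. complex_of_real (1/k) * K p q) (w v s t) (w v s t) - bf n Y (w v s t) (w v t s))"
      by (rule pair_lemma(2)[OF pXY1 pXY2])
    have pos: "0 \<le> 1 / real d ^ 2" by simp
    show ?thesis unfolding e by (rule nn_scale[OF nS pos])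
  qed
  show ?thesis
    apply (rule feas_fold)
    using G1 G2 G4 G5 trace_rhoB[OF d F3] unfolding W'_def K'_def Y'_def
        apply blast+
    done
qed



definition rhoA :: "nat \<Rightarrow> cmat \<Rightarrow> cmat" where
  "rhoA d \<rho> = (\<lambda>i j. \<Sum>s<d. \<rho> (i*d+s) (j*d+s))"

definition WA :: "nat \<Rightarrow> nat \<Rightarrow> cmat \<Rightarrow> cmat" where
  "WA b d W = (\<lambda>p q. \<Sum>s<d. \<Sum>t<d. W (E b d p s s) (E b d q t t))"

definition lift :: "nat \<Rightarrow> nat \<Rightarrow> nat \<Rightarrow> nat \<Rightarrow> (nat \<Rightarrow> complex) \<Rightarrow> nat \<Rightarrow> complex" where
  "lift b d s0 t0 x = (\<lambda>y. if y div (b*d) mod d = s0 \<and> y mod (b*d) mod d = t0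
      then x (y div (b*d) div d * b + y mod (b*d) div d) else 0)"

lemma lift_E:
  assumes "0 < b" "s < d" "t < d"
  shows "lift b d s0 t0 x (E b d p s t) = (if s = s0 \<and> t = t0 then x p else 0)"
  unfolding lift_def E_decode[OF assms] by simp

lemma bf_lift:
  assumes b: "0 < b" and h: "s0 < d" "t0 < d" "s1 < d" "t1 < d"
  shows "bf ((a*d)*(b*d)) M (lift b d s0 t0 x) (lift b d s1 t1 y) =
    bf (a*b) (\<lambda>p q. M (E b d p s0 t0) (E b d q s1 t1)) x y"
proof -
  have "bf ((a*d)*(b*d)) M (lift b d s0 t0 x) (lift b d s1 t1 y) =
    (\<Sum>s<d. \<Sum>t<d. \<Sum>s'<d. \<Sum>t'<d. if s = s0 \<and> t = t0 \<and> s' = s1 \<and> t' = t1 then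
       bf (a*b) (\<lambda>p q. M (E b d p s t) (E b d q s' t')) x y else 0)"
    unfolding bf_big[OF b]
  proof (rule sum4_cong_if)
    fix s t s' t' assume hh: "s < d" "t < d" "s' < d" "t' < d"
    have "bf (a*b) (\<lambda>p q. M (E b d p s t) (E b d q s' t')) (\<lambda>p. lift b d s0 t0 x (E b d p s t))
        (\<lambda>q. lift b d s1 t1 y (E b d q s' t')) =
      bf (a*b) (\<lambda>p q. M (E b d p s t) (E b d q s' t')) (\<lambda>p. if s = s0 \<and> t = t0 then x p else 0)
        (\<lambda>q. if s' = s1 \<and> t' = t1 then y q else 0)"
      by (intro bf_cong) (simp_all add: lift_E[OF b hh(1,2)] lift_E[OF b hh(3,4)])
    then show "bf (a*b) (\<lambda>p q. M (E b d p s t) (E b d q s' t')) (\<lambda>p. lift b d s0 t0 x (E b d p s t))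
        (\<lambda>q. lift b d s1 t1 y (E b d q s' t')) =
      (if s = s0 \<and> t = t0 \<and> s' = s1 \<and> t' = t1 then bf (a*b) (\<lambda>p q. M (E b d p s t) (E b d q s' t')) x y else 0)"
      by (simp add: bf_if_vec)
  qed
  also have "\<dots> = bf (a*b) (\<lambda>p q. M (E b d p s0 t0) (E b d q s1 t1)) x y"
    by (rule sum4_point[OF h])
  finally show ?thesis .
qed

lemma bf_sum_mat:
  "bf n (\<lambda>p q. \<Sum>s\<in>S. \<Sum>t\<in>T. G s t p q) x y = (\<Sum>s\<in>S. \<Sum>t\<in>T. bf n (G s t) x y)"
proof -
  have "bf n (\<lambda>p q. \<Sum>s\<in>S. \<Sum>t\<in>T. G s t p q) x y = (\<Sum>p<n. \<Sum>q<n. \<Sum>s\<in>S. \<Sum>t\<in>T. cnj (x p) * G s t p q * y q)"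
    unfolding bf_def by (simp add: sum_distrib_left sum_distrib_right)
  also have "\<dots> = (\<Sum>p<n. \<Sum>s\<in>S. \<Sum>q<n. \<Sum>t\<in>T. cnj (x p) * G s t p q * y q)"
    by (rule sum.cong[OF refl], rule sum.swap)
  also have "\<dots> = (\<Sum>p<n. \<Sum>s\<in>S. \<Sum>t\<in>T. \<Sum>q<n. cnj (x p) * G s t p q * y q)"
    by (rule sum.cong[OF refl], rule sum.cong[OF refl], rule sum.swap)
  also have "\<dots> = (\<Sum>s\<in>S. \<Sum>p<n. \<Sum>t\<in>T. \<Sum>q<n. cnj (x p) * G s t p q * y q)"
    by (rule sum.swap)
  also have "\<dots> = (\<Sum>s\<in>S. \<Sum>t\<in>T. \<Sum>p<n. \<Sum>q<n. cnj (x p) * G s t p q * y q)"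
    by (rule sum.cong[OF refl], rule sum.swap)
  finally show ?thesis unfolding bf_def .
qed

definition L :: "nat \<Rightarrow> nat \<Rightarrow> (nat \<Rightarrow> complex) \<Rightarrow> nat \<Rightarrow> complex" where
  "L b d x = (\<lambda>y. \<Sum>s<d. lift b d s s x y)"

lemma bf_WA:
  assumes b: "0 < b"
  shows "bf (a*b) (WA b d M) x x = bf ((a*d)*(b*d)) M (L b d x) (L b d x)"
proof -
  have "bf ((a*d)*(b*d)) M (L b d x) (L b d x) = (\<Sum>s<d. \<Sum>t<d. bf ((a*d)*(b*d)) M (lift b d s s x) (lift b d t t x))"
    unfolding L_def by (rule bf_sum) auto
  also have "\<dots> = (\<Sum>s<d. \<Sum>t<d. bf (a*b) (\<lambda>p q. M (E b d p s s) (E b d q t t)) x x)"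
    by (intro sum.cong refl) (simp add: bf_lift[OF b])
  also have "\<dots> = bf (a*b) (WA b d M) x x"
    unfolding WA_def by (rule bf_sum_mat[symmetric])
  finally show ?thesis ..
qed


lemma WA_K:
  assumes b: "0 < b" and d: "0 < d"
  shows "WA b d (kron (b*d) R (idm (b*d))) p q = kron b (rhoA d R) (idm b) p q"
proof -
  have "WA b d (kron (b*d) R (idm (b*d))) p q =
     (\<Sum>s<d. \<Sum>t<d. if p mod b = q mod b \<and> s = t then R (p div b * d + s) (q div b * d + t) else 0)"
    unfolding WA_def by (intro sum.cong refl) (simp add: kron_big[OF b])
  also have "\<dots> = (\<Sum>s<d. if p mod b = q mod b then R (p div b * d + s) (q div b * d + s) else 0)"
  proof (rule sum.cong[OF refl])
    fix s assume "s \<in> {..<d}"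
    then show "(\<Sum>t<d. if p mod b = q mod b \<and> s = t then R (p div b * d + s) (q div b * d + t) else 0)
      = (if p mod b = q mod b then R (p div b * d + s) (q div b * d + s) else 0)"
      by (cases "p mod b = q mod b") simp_all
  qed
  also have "\<dots> = kron b (rhoA d R) (idm b) p q"
    unfolding kron_def idm_def rhoA_def by simp
  finally show ?thesis .
qed

lemma trace_rhoA:
  "trace a (rhoA d R) = trace (a*d) R"
  unfolding trace_def rhoA_def by (rule sum_split_mult[symmetric])

lemma ptrans_WA:
  assumes b: "0 < b"
  shows "ptrans b (WA b d W) p q = (\<Sum>s<d. \<Sum>t<d. ptrans (b*d) W (E b d p s t) (E b d q t s))"
  unfolding ptrans_def[of b] WA_def
  by (intro sum.cong refl) (simp add: ptrans_big[OF b])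

lemma dirA_trace:
  assumes b: "0 < b" and d: "0 < d"
  shows "trace ((a*d)*(b*d)) (mmult ((a*d)*(b*d)) (choi (b*d) (tensor_map d d U id_units)) W)
       = trace (a*b) (mmult (a*b) (choi b U) (WA b d W))"
proof -
  have "trace ((a*d)*(b*d)) (mmult ((a*d)*(b*d)) (choi (b*d) (tensor_map d d U id_units)) W)
     = (\<Sum>s<d. \<Sum>t<d. \<Sum>s'<d. \<Sum>t'<d. if t = s \<and> t' = s' then
          (\<Sum>p<a*b. \<Sum>q<a*b. choi b U p q * W (E b d q s' t') (E b d p s t)) else 0)"
    unfolding trace_big[OF b]
  proof (rule sum4_cong_if)
    fix s t s' t' assume h: "s < d" "t < d" "s' < d" "t' < d"
    show "(\<Sum>p<a*b. \<Sum>q<a*b. choi (b*d) (tensor_map d d U id_units) (E b d p s t) (E b d q s' t') *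
       W (E b d q s' t') (E b d p s t)) = (if t = s \<and> t' = s' then
          (\<Sum>p<a*b. \<Sum>q<a*b. choi b U p q * W (E b d q s' t') (E b d p s t)) else 0)"
      unfolding choi_big[OF b h] by (cases "t = s"; cases "t' = s'") simp_all
  qed
  also have "\<dots> = (\<Sum>s<d. \<Sum>s'<d. \<Sum>p<a*b. \<Sum>q<a*b. choi b U p q * W (E b d q s' s') (E b d p s s))"
    by (rule sum4_P1)
  also have "\<dots> = (\<Sum>p<a*b. \<Sum>q<a*b. \<Sum>s<d. \<Sum>s'<d. choi b U p q * W (E b d q s' s') (E b d p s s))"
  proof -
    have "(\<Sum>s<d. \<Sum>s'<d. \<Sum>p<a*b. \<Sum>q<a*b. choi b U p q * W (E b d q s' s') (E b d p s s))
       = (\<Sum>s<d. \<Sum>p<a*b. \<Sum>s'<d. \<Sum>q<a*b. choi b U p q * W (E b d q s' s') (E b d p s s))"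
      by (rule sum.cong[OF refl], rule sum.swap)
    also have "\<dots> = (\<Sum>p<a*b. \<Sum>s<d. \<Sum>s'<d. \<Sum>q<a*b. choi b U p q * W (E b d q s' s') (E b d p s s))"
      by (rule sum.swap)
    also have "\<dots> = (\<Sum>p<a*b. \<Sum>s<d. \<Sum>q<a*b. \<Sum>s'<d. choi b U p q * W (E b d q s' s') (E b d p s s))"
      by (rule sum.cong[OF refl], rule sum.cong[OF refl], rule sum.swap)
    also have "\<dots> = (\<Sum>p<a*b. \<Sum>q<a*b. \<Sum>s<d. \<Sum>s'<d. choi b U p q * W (E b d q s' s') (E b d p s s))"
      by (rule sum.cong[OF refl], rule sum.swap)
    finally show ?thesis .
  qed
  also have "\<dots> = (\<Sum>p<a*b. \<Sum>q<a*b. choi b U p q * WA b d W q p)"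
  proof (intro sum.cong refl)
    fix p q
    have "(\<Sum>s<d. \<Sum>s'<d. W (E b d q s' s') (E b d p s s)) = WA b d W q p"
      unfolding WA_def by (rule sum.swap)
    from this[symmetric] show "(\<Sum>s<d. \<Sum>s'<d. choi b U p q * W (E b d q s' s') (E b d p s s)) = choi b U p q * WA b d W q p"
      by (simp only: sum_distrib_left)
  qed
  finally show ?thesis unfolding trace_small .
qed


lemma K_sum_st:
  assumes b: "0 < b"
  shows "(\<Sum>s<d. \<Sum>t<d. kron (b*d) R (idm (b*d)) (E b d p s t) (E b d q s t)) = of_nat d * kron b (rhoA d R) (idm b) p q"
proof -
  have "(\<Sum>s<d. \<Sum>t<d. kron (b*d) R (idm (b*d)) (E b d p s t) (E b d q s t))
     = (\<Sum>s<d. \<Sum>t<d. if p mod b = q mod b then R (p div b * d + s) (q div b * d + s) else 0)"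
    by (intro sum.cong refl) (simp add: kron_big[OF b])
  also have "\<dots> = of_nat d * kron b (rhoA d R) (idm b) p q"
    unfolding kron_def idm_def rhoA_def by (simp add: sum_distrib_left)
  finally show ?thesis .
qed

lemma dirA_feas:
  assumes b: "0 < b" and d: "0 < d" and k: "0 < k" and F: "pptp_feasible (a*d) (b*d) (k * real d) \<rho> W"
  shows "pptp_feasible a b k (rhoA d \<rho>) (WA b d W)"
proof -
  define N where "N = (a*d)*(b*d)"
  define n where "n = a*b"
  define K' where "K' = kron (b*d) \<rho> (idm (b*d))"
  define Y' where "Y' = ptrans (b*d) W"
  define K where "K = kron b (rhoA d \<rho>) (idm b)"
  define c where "c = complex_of_real (1 / (k * real d))"
  note F1 = feas_unfold(1)[OF F, folded N_def]
  note F2 = feas_unfold(2)[OF F, folded N_def K'_def]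
  note F3 = feas_unfold(3)[OF F]
  note F4 = feas_unfold(4)[OF F, folded N_def K'_def Y'_def c_def]
  note F5 = feas_unfold(5)[OF F, folded N_def K'_def Y'_def c_def]
  have pXY1: "psd N (\<lambda>p q. c * K' p q + Y' p q)"
    unfolding psd_bf bf_add_mat bf_smult_mat using F4 by (simp add: add.commute)
  have pXY2: "psd N (\<lambda>p q. c * K' p q - Y' p q)"
    unfolding psd_bf bf_diff_mat bf_smult_mat using F5 by simp
  have eK: "bf n K x x = bf N K' (L b d x) (L b d x)" for x
  proof -
    have "bf n K x x = bf n (WA b d K') x x"
      unfolding K_def K'_def by (intro bf_cong) (simp_all add: WA_K[OF b d])
    then show ?thesis unfolding n_def N_def bf_WA[OF b] .
  qed
  have cd: "c * of_nat d = complex_of_real (1/k)"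
    unfolding c_def using d by simp
  have key: "(\<Sum>s<d. \<Sum>t<d. bf N (\<lambda>p q. c * K' p q) (lift b d s t x) (lift b d s t x))
      = complex_of_real (1/k) * bf n K x x"
   and key2: "(\<Sum>s<d. \<Sum>t<d. bf N Y' (lift b d s t x) (lift b d t s x)) = bf n (ptrans b (WA b d W)) x x" for x
  proof -
    have "(\<Sum>s<d. \<Sum>t<d. bf N (\<lambda>p q. c * K' p q) (lift b d s t x) (lift b d s t x))
       = c * (\<Sum>s<d. \<Sum>t<d. bf n (\<lambda>p q. K' (E b d p s t) (E b d q s t)) x x)"
      unfolding bf_smult_mat N_def n_def by (simp add: bf_lift[OF b] sum_distrib_left)
    also have "(\<Sum>s<d. \<Sum>t<d. bf n (\<lambda>p q. K' (E b d p s t) (E b d q s t)) x x)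
       = bf n (\<lambda>p q. \<Sum>s<d. \<Sum>t<d. K' (E b d p s t) (E b d q s t)) x x"
      by (rule bf_sum_mat[symmetric])
    also have "\<dots> = bf n (\<lambda>p q. of_nat d * K p q) x x"
      unfolding K'_def K_def by (intro bf_cong) (simp_all add: K_sum_st[OF b])
    finally show "(\<Sum>s<d. \<Sum>t<d. bf N (\<lambda>p q. c * K' p q) (lift b d s t x) (lift b d s t x))
      = complex_of_real (1/k) * bf n K x x"
      unfolding bf_smult_mat cd[symmetric] by simp
    have "(\<Sum>s<d. \<Sum>t<d. bf N Y' (lift b d s t x) (lift b d t s x))
       = (\<Sum>s<d. \<Sum>t<d. bf n (\<lambda>p q. Y' (E b d p s t) (E b d q t s)) x x)"
      unfolding N_def n_def by (intro sum.cong refl) (simp add: bf_lift[OF b])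
    also have "\<dots> = bf n (\<lambda>p q. \<Sum>s<d. \<Sum>t<d. Y' (E b d p s t) (E b d q t s)) x x"
      by (rule bf_sum_mat[symmetric])
    also have "\<dots> = bf n (ptrans b (WA b d W)) x x"
      unfolding Y'_def by (intro bf_cong) (simp_all add: ptrans_WA[OF b])
    finally show "(\<Sum>s<d. \<Sum>t<d. bf N Y' (lift b d s t x) (lift b d t s x)) = bf n (ptrans b (WA b d W)) x x" .
  qed
  show ?thesis
  proof (rule feas_fold)
    fix x
    show "nn (bf (a*b) (WA b d W) x x)"
      using F1 unfolding bf_WA[OF b] N_def by simp
    show "nn (bf (a*b) (kron b (rhoA d \<rho>) (idm b)) x x - bf (a*b) (WA b d W) x x)"
      using F2[of "L b d x"] eK[of x] unfolding bf_WA[OF b] N_def n_def K_def by simp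
    show "trace a (rhoA d \<rho>) = 1" using F3 trace_rhoA by simp
    have "nn (\<Sum>s<d. \<Sum>t<d. bf N (\<lambda>p q. c * K' p q) (lift b d s t x) (lift b d s t x) + bf N Y' (lift b d s t x) (lift b d t s x))"
      by (rule pair_lemma(1)[OF pXY1 pXY2])
    then show "nn (bf (a*b) (ptrans b (WA b d W)) x x + complex_of_real (1/k) * bf (a*b) (kron b (rhoA d \<rho>) (idm b)) x x)"
      unfolding sum.distrib key key2 n_def K_def by (simp add: add.commute)
    have "nn (\<Sum>s<d. \<Sum>t<d. bf N (\<lambda>p q. c * K' p q) (lift b d s t x) (lift b d s t x) - bf N Y' (lift b d s t x) (lift b d t s x))"
      by (rule pair_lemma(2)[OF pXY1 pXY2])
    then show "nn (complex_of_real (1/k) * bf (a*b) (kron b (rhoA d \<rho>) (idm b)) x x - bf (a*b) (ptrans b (WA b d W)) x x)"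
      unfolding sum_subtractf key key2 n_def K_def by simp
  qed
qed



definition V :: "nat \<Rightarrow> nat \<Rightarrow> (nat \<Rightarrow> nat \<Rightarrow> cmat) \<Rightarrow> real \<Rightarrow> real set" where
  "V a b U k = {Re (trace (a * b) (mmult (a * b) (choi b U) W)) | \<rho> W. pptp_feasible a b k \<rho> W}"

lemma F_V: "F_pptp a b U k = Sup (V a b U k)"
  unfolding F_pptp_def V_def ..

lemma V_eq:
  assumes b: "0 < b" and d: "0 < d" and k: "0 < k"
  shows "V (a*d) (b*d) (tensor_map d d U id_units) (k * real d) = V a b U k"
proof
  show "V (a*d) (b*d) (tensor_map d d U id_units) (k * real d) \<subseteq> V a b U k"
  proof
    fix x assume "x \<in> V (a*d) (b*d) (tensor_map d d U id_units) (k * real d)"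
    then obtain \<rho> W where x: "x = Re (trace ((a*d)*(b*d)) (mmult ((a*d)*(b*d)) (choi (b*d) (tensor_map d d U id_units)) W))"
      and f: "pptp_feasible (a*d) (b*d) (k * real d) \<rho> W" unfolding V_def by blast
    have "pptp_feasible a b k (rhoA d \<rho>) (WA b d W)" by (rule dirA_feas[OF b d k f])
    moreover have "x = Re (trace (a*b) (mmult (a*b) (choi b U) (WA b d W)))"
      unfolding x dirA_trace[OF b d] ..
    ultimately show "x \<in> V a b U k" unfolding V_def by blast
  qed
next
  show "V a b U k \<subseteq> V (a*d) (b*d) (tensor_map d d U id_units) (k * real d)"
  proof
    fix x assume "x \<in> V a b U k"
    then obtain \<rho> W where x: "x = Re (trace (a*b) (mmult (a*b) (choi b U) W))"
      and f: "pptp_feasible a b k \<rho> W" unfolding V_def by blast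
    have "pptp_feasible (a*d) (b*d) (k * real d) (rhoB d \<rho>) (WB b d W)" by (rule dirB_feas[OF b d k f])
    moreover have "x = Re (trace ((a*d)*(b*d)) (mmult ((a*d)*(b*d)) (choi (b*d) (tensor_map d d U id_units)) (WB b d W)))"
      unfolding x dirB_trace[OF b d] ..
    ultimately show "x \<in> V (a*d) (b*d) (tensor_map d d U id_units) (k * real d)" unfolding V_def by blast
  qed
qed

lemma feas_mono:
  assumes k: "0 < k" "k \<le> k'" and F: "pptp_feasible a b k' \<rho> W"
  shows "pptp_feasible a b k \<rho> W"
proof -
  note F1 = feas_unfold(1)[OF F]
  note F2 = feas_unfold(2)[OF F]
  note F4 = feas_unfold(4)[OF F]
  note F5 = feas_unfold(5)[OF F]
  let ?K = "kron b \<rho> (idm b)"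
  have pK: "nn (bf (a*b) ?K v v)" for v using nn_add[OF F1[of v] F2[of v]] by simp
  have r: "0 \<le> 1/k - 1/k'" using k by (simp add: frac_le)
  have e: "complex_of_real (1/k) = complex_of_real (1/k') + complex_of_real (1/k - 1/k')" by simp
  show ?thesis
  proof (rule feas_fold)
    fix v
    show "nn (bf (a*b) W v v)" by (rule F1)
    show "nn (bf (a*b) ?K v v - bf (a*b) W v v)" by (rule F2)
    show "trace a \<rho> = 1" by (rule feas_unfold(3)[OF F])
    have "nn ((bf (a*b) (ptrans b W) v v + complex_of_real (1/k') * bf (a*b) ?K v v) + complex_of_real (1/k - 1/k') * bf (a*b) ?K v v)"
      by (rule nn_add[OF F4 nn_scale[OF pK r]])
    then show "nn (bf (a*b) (ptrans b W) v v + complex_of_real (1/k) * bf (a*b) ?K v v)"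
      unfolding e by (simp add: algebra_simps)
    have "nn ((complex_of_real (1/k') * bf (a*b) ?K v v - bf (a*b) (ptrans b W) v v) + complex_of_real (1/k - 1/k') * bf (a*b) ?K v v)"
      by (rule nn_add[OF F5 nn_scale[OF pK r]])
    then show "nn (complex_of_real (1/k) * bf (a*b) ?K v v - bf (a*b) (ptrans b W) v v)"
      unfolding e by (simp add: algebra_simps)
  qed
qed

lemma ptrans_msmult: "ptrans b (msmult c W) = msmult c (ptrans b W)"
  unfolding ptrans_def msmult_def ..

lemma feas_scale:
  assumes k: "0 < k" "k \<le> k'" and F: "pptp_feasible a b k \<rho> W"
  shows "pptp_feasible a b k' \<rho> (msmult (complex_of_real (k / k')) W)"
proof -
  note F1 = feas_unfold(1)[OF F]
  note F2 = feas_unfold(2)[OF F]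
  note F4 = feas_unfold(4)[OF F]
  note F5 = feas_unfold(5)[OF F]
  let ?K = "kron b \<rho> (idm b)"
  let ?t = "k / k'"
  have kp: "0 < k'" using k by simp
  have t0: "0 \<le> ?t" "0 \<le> 1 - ?t" using k kp by auto
  have pK: "nn (bf (a*b) ?K v v)" for v using nn_add[OF F1[of v] F2[of v]] by simp
  have tk: "complex_of_real ?t * complex_of_real (1/k) = complex_of_real (1/k')"
    unfolding of_real_mult[symmetric] using k by simp
  have e4: "complex_of_real ?t * (Y + complex_of_real (1/k) * K) = complex_of_real ?t * Y + complex_of_real (1/k') * K" for Y K
    by (simp only: distrib_left mult.assoc[symmetric] tk)
  have e5: "complex_of_real ?t * (complex_of_real (1/k) * K - Y) = complex_of_real (1/k') * K - complex_of_real ?t * Y" for Y K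
    by (simp only: right_diff_distrib mult.assoc[symmetric] tk)
  show ?thesis
  proof (rule feas_fold)
    fix v
    show "nn (bf (a*b) (msmult (complex_of_real ?t) W) v v)"
      unfolding bf_msmult by (rule nn_scale[OF F1 t0(1)])
    have "nn (complex_of_real (1 - ?t) * bf (a*b) ?K v v + complex_of_real ?t * (bf (a*b) ?K v v - bf (a*b) W v v))"
      by (rule nn_add[OF nn_scale[OF pK t0(2)] nn_scale[OF F2 t0(1)]])
    then show "nn (bf (a*b) ?K v v - bf (a*b) (msmult (complex_of_real ?t) W) v v)"
      unfolding bf_msmult by (simp add: algebra_simps)
    show "trace a \<rho> = 1" by (rule feas_unfold(3)[OF F])
    have "nn (complex_of_real ?t * (bf (a*b) (ptrans b W) v v + complex_of_real (1/k) * bf (a*b) ?K v v))"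
      by (rule nn_scale[OF F4 t0(1)])
    then show "nn (bf (a*b) (ptrans b (msmult (complex_of_real ?t) W)) v v + complex_of_real (1/k') * bf (a*b) ?K v v)"
      unfolding ptrans_msmult bf_msmult e4 .
    have "nn (complex_of_real ?t * (complex_of_real (1/k) * bf (a*b) ?K v v - bf (a*b) (ptrans b W) v v))"
      by (rule nn_scale[OF F5 t0(1)])
    then show "nn (complex_of_real (1/k') * bf (a*b) ?K v v - bf (a*b) (ptrans b (msmult (complex_of_real ?t) W)) v v)"
      unfolding ptrans_msmult bf_msmult e5 .
  qed
qed

lemma trace_msmult: "trace n (mmult n J (msmult c W)) = c * trace n (mmult n J W)"
  unfolding trace_def mmult_def msmult_def by (simp add: sum_distrib_left algebra_simps)

lemma V_scale:
  assumes k: "0 < k" "k \<le> k'" and x: "x \<in> V a b U k"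
  shows "(k / k') * x \<in> V a b U k'"
proof -
  obtain \<rho> W where xe: "x = Re (trace (a*b) (mmult (a*b) (choi b U) W))" and f: "pptp_feasible a b k \<rho> W"
    using x unfolding V_def by blast
  have "(k / k') * x = Re (trace (a*b) (mmult (a*b) (choi b U) (msmult (complex_of_real (k / k')) W)))"
    unfolding trace_msmult xe by simp
  then show ?thesis using feas_scale[OF k f] unfolding V_def by blast
qed

lemma V_mono:
  assumes "0 < k" "k \<le> k'"
  shows "V a b U k' \<subseteq> V a b U k"
  unfolding V_def using feas_mono[OF assms] by blast



lemma lt_block:
  fixes q r a b :: nat
  assumes "q < a * b" "r < b"
  shows "q div b * b + r < a * b"
proof -
  have "q div b < a" using assms by (simp add: less_mult_imp_div_less)
  then have "q div b + 1 \<le> a" by simp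
  then have "(q div b + 1) * b \<le> a * b" by (rule mult_right_mono) simp
  then show ?thesis using assms(2) by (simp add: algebra_simps)
qed

lemma V_bound:
  assumes b: "0 < b" and k: "0 < k" and x: "x \<in> V a b U k"
  shows "x \<le> (2 * (\<Sum>p<a*b. \<Sum>q<a*b. cmod (choi b U p q))) / k"
proof -
  obtain \<rho> W where xe: "x = Re (trace (a*b) (mmult (a*b) (choi b U) W))" and F: "pptp_feasible a b k \<rho> W"
    using x unfolding V_def by blast
  define n where "n = a*b"
  define K where "K = kron b \<rho> (idm b)"
  define Y where "Y = ptrans b W"
  define J where "J = choi b U"
  note F1 = feas_unfold(1)[OF F, folded n_def]
  note F2 = feas_unfold(2)[OF F, folded n_def K_def]
  note F3 = feas_unfold(3)[OF F]
  note F4 = feas_unfold(4)[OF F, folded n_def K_def Y_def]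
  note F5 = feas_unfold(5)[OF F, folded n_def K_def Y_def]
  have psdK: "psd n K" unfolding psd_bf
  proof
    fix v show "nn (bf n K v v)" using nn_add[OF F1[of v] F2[of v]] by simp
  qed
  have pXY1: "psd n (\<lambda>p q. complex_of_real (1/k) * K p q + Y p q)"
    unfolding psd_bf bf_add_mat bf_smult_mat using F4 by (simp add: add.commute)
  have pXY2: "psd n (\<lambda>p q. complex_of_real (1/k) * K p q - Y p q)"
    unfolding psd_bf bf_diff_mat bf_smult_mat using F5 by simp
  have psdr: "psd a \<rho>"
    unfolding psd_bf
  proof
    fix v
    have "nn (\<Sum>i\<in>{..<a}. \<Sum>j\<in>{..<a}. cnj (v i) * K (i*b) (j*b) * v j)"
      by (rule psd_pull[OF psdK]) (auto simp: n_def b)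
    moreover have "K (i*b) (j*b) = \<rho> i j" for i j unfolding K_def kron_def idm_def using b by simp
    ultimately show "nn (bf a \<rho> v v)" unfolding bf_def by simp
  qed
  have diag: "Re (\<rho> i i) \<le> 1" if "i < a" for i
  proof -
    have nnd: "nn (\<rho> j j)" if "j < a" for j using psd_diag[OF psdr that] .
    have "Re (\<rho> i i) \<le> (\<Sum>j<a. Re (\<rho> j j))"
      by (rule member_le_sum) (use that nnd in \<open>auto simp: nn_def\<close>)
    also have "\<dots> = 1" using F3 unfolding trace_def by (simp flip: Re_sum)
    finally show ?thesis .
  qed
  have Kdiag: "Re (K p p) \<le> 1" if "p < n" for p
  proof -
    have "p div b < a" using that unfolding n_def by (simp add: less_mult_imp_div_less)
    then show ?thesis unfolding K_def kron_def idm_def using diag by simp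
  qed
  have Ybound: "cmod (Y p q) \<le> 2 / k" if "p < n" "q < n" for p q
  proof -
    have z1: "cmod (complex_of_real (1/k) * K p q + Y p q) \<le>
        Re (complex_of_real (1/k) * K p p + Y p p) + Re (complex_of_real (1/k) * K q q + Y q q)"
      using psd_entry[OF pXY1 that] by simp
    have z2: "cmod (complex_of_real (1/k) * K p q - Y p q) \<le>
        Re (complex_of_real (1/k) * K p p - Y p p) + Re (complex_of_real (1/k) * K q q - Y q q)"
      using psd_entry[OF pXY2 that] by simp
    have "Y p q = ((complex_of_real (1/k) * K p q + Y p q) - (complex_of_real (1/k) * K p q - Y p q)) / 2"
      by simp
    then have "cmod (Y p q) \<le> (cmod (complex_of_real (1/k) * K p q + Y p q) + cmod (complex_of_real (1/k) * K p q - Y p q)) / 2"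
      by (metis divide_right_mono norm_divide norm_numeral norm_triangle_ineq4 real_norm_def zero_le_numeral)
    also have "\<dots> \<le> (2 / k * Re (K p p) + 2 / k * Re (K q q)) / 2"
      using z1 z2 by simp
    also have "\<dots> \<le> (2 / k * 1 + 2 / k * 1) / 2"
      using Kdiag[OF that(1)] Kdiag[OF that(2)] k
      by (intro divide_right_mono add_mono mult_left_mono) auto
    finally show ?thesis by simp
  qed
  have Wbound: "cmod (W q p) \<le> 2 / k" if "p < n" "q < n" for p q
  proof -
    have "W q p = Y (q div b * b + p mod b) (p div b * b + q mod b)"
      unfolding Y_def ptrans_def using b by simp
    moreover have "q div b * b + p mod b < n" "p div b * b + q mod b < n"
      using that b unfolding n_def by (auto intro: lt_block)
    ultimately show ?thesis using Ybound by simp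
  qed
  have "x \<le> cmod (\<Sum>p<n. \<Sum>q<n. J p q * W q p)"
    unfolding xe trace_small n_def J_def by (rule complex_Re_le_cmod)
  also have "\<dots> \<le> (\<Sum>p<n. \<Sum>q<n. cmod (J p q) * cmod (W q p))"
    by (rule order_trans[OF norm_sum sum_mono], rule order_trans[OF norm_sum sum_mono]) (simp add: norm_mult)
  also have "\<dots> \<le> (\<Sum>p<n. \<Sum>q<n. cmod (J p q) * (2 / k))"
    by (intro sum_mono mult_left_mono Wbound) auto
  also have "\<dots> = (2 * (\<Sum>p<n. \<Sum>q<n. cmod (J p q))) / k"
    by (simp add: sum_distrib_left sum_distrib_right sum_divide_distrib mult.commute)
  finally show ?thesis unfolding n_def J_def .
qed

lemma V_nonempty:
  assumes a: "0 < a" and b: "0 < b" and k: "0 < k"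
  shows "V a b U k \<noteq> {}"
proof -
  define \<rho> :: cmat where "\<rho> = (\<lambda>i j. if i = 0 \<and> j = 0 then 1 else 0)"
  define K where "K = kron b \<rho> (idm b)"
  have Kv: "nn (bf (a*b) K v v)" for v
  proof -
    have "bf (a*b) K v v = (\<Sum>p<a*b. if p < b then cnj (v p) * v p else 0)"
      unfolding bf_def
    proof (rule sum.cong[OF refl])
      fix p assume p: "p \<in> {..<a*b}"
      have "(\<Sum>q<a*b. cnj (v p) * K p q * v q) = (\<Sum>q<a*b. if q = p then (if p < b then cnj (v p) * v p else 0) else 0)"
      proof (rule sum.cong[OF refl])
        fix q assume "q \<in> {..<a*b}"
        show "cnj (v p) * K p q * v q = (if q = p then (if p < b then cnj (v p) * v p else 0) else 0)"
          unfolding K_def kron_def idm_def \<rho>_def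
          using b by (cases "p < b"; cases "q < b") (auto simp: div_eq_0_iff)
      qed
      also have "\<dots> = (if p < b then cnj (v p) * v p else 0)" using p by simp
      finally show "(\<Sum>q<a*b. cnj (v p) * K p q * v q) = (if p < b then cnj (v p) * v p else 0)" .
    qed
    moreover have "nn (\<Sum>p<a*b. if p < b then cnj (v p) * v p else 0)"
      by (intro nn_sum) (auto simp: nn_def)
    ultimately show ?thesis by simp
  qed
  have ptz: "ptrans b (\<lambda>_ _. 0) = (\<lambda>_ _. 0)" unfolding ptrans_def ..
  have "pptp_feasible a b k \<rho> (\<lambda>_ _. 0)"
  proof (rule feas_fold)
    fix v
    show "nn (bf (a*b) (\<lambda>_ _. 0) v v)" by (simp add: bf_zero_mat nn_def)
    show "nn (bf (a*b) (kron b \<rho> (idm b)) v v - bf (a*b) (\<lambda>_ _. 0) v v)"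
      using Kv unfolding K_def by (simp add: bf_zero_mat)
    show "trace a \<rho> = 1" unfolding trace_def \<rho>_def using a by simp
    have "nn (complex_of_real (1/k) * bf (a*b) K v v)" by (rule nn_scale[OF Kv]) (use k in simp)
    then show "nn (bf (a*b) (ptrans b (\<lambda>_ _. 0)) v v + complex_of_real (1/k) * bf (a*b) (kron b \<rho> (idm b)) v v)"
      and "nn (complex_of_real (1/k) * bf (a*b) (kron b \<rho> (idm b)) v v - bf (a*b) (ptrans b (\<lambda>_ _. 0)) v v)"
      unfolding ptz bf_zero_mat K_def by simp_all
  qed
  then show ?thesis unfolding V_def by blast
qed



lemma greatest_exists:
  fixes U :: "nat \<Rightarrow> nat \<Rightarrow> cmat"
  assumes a: "0 < a" and b: "0 < b"
  defines "P \<equiv> \<lambda>k::real. 0 \<le> k \<and> (k = 0 \<or> F_pptp a b U k = 1)"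
  shows "\<exists>g. P g \<and> (\<forall>y. P y \<longrightarrow> y \<le> g)"
proof -
  define C where "C = 2 * (\<Sum>p<a*b. \<Sum>q<a*b. cmod (choi b U p q))"
  have C0: "0 \<le> C" unfolding C_def by (simp add: sum_nonneg)
  define S where "S = {k. P k}"
  have S0: "0 \<in> S" unfolding S_def P_def by simp
  have Vb: "\<And>k x. 0 < k \<Longrightarrow> x \<in> V a b U k \<Longrightarrow> x \<le> C / k"
    unfolding C_def by (rule V_bound[OF b])
  have Vne: "\<And>k. 0 < k \<Longrightarrow> V a b U k \<noteq> {}" by (rule V_nonempty[OF a b])
  have Vbdd: "\<And>k. 0 < k \<Longrightarrow> bdd_above (V a b U k)" using Vb unfolding bdd_above_def by blast
  have SC: "k \<le> C" if "k \<in> S" for k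
  proof (cases "k = 0")
    case True then show ?thesis using C0 by simp
  next
    case False
    then have k: "0 < k" "F_pptp a b U k = 1" using that unfolding S_def P_def by auto
    have "Sup (V a b U k) \<le> C / k" by (rule cSup_least[OF Vne[OF k(1)]]) (rule Vb[OF k(1)])
    then have "1 \<le> C / k" using k(2) unfolding F_V by simp
    then show ?thesis using k(1) by (simp add: le_divide_eq)
  qed
  have Sbdd: "bdd_above S" using SC unfolding bdd_above_def by blast
  define g where "g = Sup S"
  have Sle: "y \<le> g" if "y \<in> S" for y unfolding g_def by (rule cSup_upper[OF that Sbdd])
  have g0: "0 \<le> g" using Sle[OF S0] .
  have Pg: "P g"
  proof (cases "g = 0")
    case True then show ?thesis unfolding P_def by simp
  next
    case False
    then have gp: "0 < g" using g0 by simp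
    obtain k0 where k0: "k0 \<in> S" "0 < k0"
    proof (rule ccontr)
      assume "\<not> thesis"
      then have "\<forall>k\<in>S. k \<le> 0" using that S_def P_def by fastforce
      then have "g \<le> 0" unfolding g_def using S0 by (intro cSup_least) auto
      then show False using gp by simp
    qed
    have Fk0: "F_pptp a b U k0 = 1" using k0 unfolding S_def P_def by auto
    have lower: "k \<le> g * F_pptp a b U g" if "k \<in> S" "0 < k" for k
    proof -
      have kg: "k \<le> g" using Sle[OF that(1)] .
      have Fk: "F_pptp a b U k = 1" using that unfolding S_def P_def by auto
      have "x \<le> (g / k) * F_pptp a b U g" if x: "x \<in> V a b U k" for x
      proof -
        have "(k / g) * x \<in> V a b U g" by (rule V_scale[OF \<open>0 < k\<close> kg x])
        then have "(k / g) * x \<le> F_pptp a b U g" unfolding F_V by (rule cSup_upper[OF _ Vbdd[OF gp]])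
        then have "(g / k) * ((k / g) * x) \<le> (g / k) * F_pptp a b U g"
          using gp \<open>0 < k\<close> by (intro mult_left_mono) auto
        then show ?thesis using gp \<open>0 < k\<close> by simp
      qed
      then have "F_pptp a b U k \<le> (g / k) * F_pptp a b U g"
        unfolding F_V[of a b U k] by (intro cSup_least[OF Vne[OF \<open>0 < k\<close>]]) auto
      then have "1 \<le> (g / k) * F_pptp a b U g" using Fk by simp
      then show ?thesis using \<open>0 < k\<close> by (simp add: field_simps)
    qed
    have "k0 \<le> g * F_pptp a b U g" by (rule lower[OF k0])
    then have gF0: "0 \<le> g * F_pptp a b U g" using k0 by simp
    have "g \<le> g * F_pptp a b U g"
      unfolding g_def[symmetric]
    proof -
      have "Sup S \<le> g * F_pptp a b U g"
      proof (rule cSup_least)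
        show "S \<noteq> {}" using S0 by blast
        fix k assume "k \<in> S"
        then show "k \<le> g * F_pptp a b U g"
          by (cases "k = 0") (use gF0 lower in \<open>auto simp: S_def P_def\<close>)
      qed
      then show "g \<le> g * F_pptp a b U g" unfolding g_def .
    qed
    then have F1: "1 \<le> F_pptp a b U g" using gp by simp
    have k0g: "k0 \<le> g" using Sle[OF k0(1)] .
    have "F_pptp a b U g \<le> F_pptp a b U k0"
      unfolding F_V by (rule cSup_subset_mono[OF Vne[OF gp] Vbdd[OF k0(2)] V_mono[OF k0(2) k0g]])
    then have "F_pptp a b U g = 1" using F1 Fk0 by simp
    then show ?thesis unfolding P_def using g0 by simp
  qed
  show ?thesis using Pg Sle unfolding S_def by blast
qed

theorem proposition1:
  fixes a b d :: nat and U :: "nat \<Rightarrow> nat \<Rightarrow> cmat"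
  assumes "quantum_channel a b U" and "1 \<le> d"
  shows "(\<forall>k::real. 0 < k \<longrightarrow>
            F_pptp (a * d) (b * d) (tensor_map d d U id_units) (k * real d) = F_pptp a b U k)
       \<and> kappa_pptp (a * d) (b * d) (tensor_map d d U id_units) = real d * kappa_pptp a b U"
proof -
  have a: "0 < a" and b: "0 < b" using assms(1) unfolding quantum_channel_def by auto
  have d: "0 < d" using assms(2) by simp
  let ?T = "tensor_map d d U id_units"
  have part1: "F_pptp (a * d) (b * d) ?T (k * real d) = F_pptp a b U k" if "0 < k" for k
    unfolding F_V V_eq[OF b d that] ..
  define P where "P = (\<lambda>k::real. 0 \<le> k \<and> (k = 0 \<or> F_pptp a b U k = 1))"
  define Pb where "Pb = (\<lambda>k::real. 0 \<le> k \<and> (k = 0 \<or> F_pptp (a*d) (b*d) ?T k = 1))"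
  have PPb: "Pb k \<longleftrightarrow> P (k / real d)" for k
  proof (cases "0 < k")
    case True
    then have "F_pptp (a*d) (b*d) ?T k = F_pptp a b U (k / real d)"
      using part1[of "k / real d"] d by simp
    then show ?thesis unfolding P_def Pb_def using True d by auto
  next
    case False
    have kk: "0 \<le> k / real d \<longleftrightarrow> k = 0" using False d by (auto simp: zero_le_divide_iff)
    then show ?thesis unfolding P_def Pb_def using False by auto
  qed
  obtain g where g: "P g" "\<forall>y. P y \<longrightarrow> y \<le> g"
    using greatest_exists[OF a b, where U=U] unfolding P_def by blast
  have kap: "kappa_pptp a b U = g"
    unfolding kappa_pptp_def P_def[symmetric] by (rule Greatest_equality) (use g in auto)
  have "kappa_pptp (a*d) (b*d) ?T = real d * g"
    unfolding kappa_pptp_def Pb_def[symmetric]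
  proof (rule Greatest_equality)
    show "Pb (real d * g)" unfolding PPb using g(1) d by simp
    fix y assume "Pb y"
    then have "y / real d \<le> g" using g(2) unfolding PPb by blast
    then show "y \<le> real d * g" using d by (simp add: divide_le_eq mult.commute)
  qed
  then show ?thesis using part1 kap by simp
qed


end
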